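(* Let $e(n)$ be the number of permutations in $S_n$ avoiding the four patterns $2413$, $4132$, $4213$, $3214$. Then $e(1)=1$, $e(2)=2$, and $e(n)=4e(n-1)-2e(n-2)$ for $n\ge 3$; explicitly, $$e(n)=\frac{(2+\sqrt2)^{n-1}+(2-\sqrt2)^{n-1}}{2}\quad\text{for all } n\ge1.$$
   Context: A permutation $w\in S_n$ avoids a pattern $p\in S_m$ if there are no indices $i_1<\dots<i_m$ such that $(w(i_1),\dots,w(i_m))$ is in the same relative order as $(p(1),\dots,p(m))$. *)

theory Defs
  imports Complex_Main "HOL-Combinatorics.Permutations"
begin

definition contains_pattern :: "nat \<Rightarrow> (nat \<Rightarrow> nat) \<Rightarrow> nat \<Rightarrow> (nat \<Rightarrow> nat) \<Rightarrow> bool" where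
  "contains_pattern n w m p \<longleftrightarrow>
     (\<exists>idx :: nat \<Rightarrow> nat. strict_mono_on {1..m} idx \<and> idx ` {1..m} \<subseteq> {1..n} \<and>
        (\<forall>a\<in>{1..m}. \<forall>b\<in>{1..m}. w (idx a) < w (idx b) \<longleftrightarrow> p a < p b))"

definition avoids :: "nat \<Rightarrow> (nat \<Rightarrow> nat) \<Rightarrow> nat \<Rightarrow> (nat \<Rightarrow> nat) \<Rightarrow> bool" where
  "avoids n w m p \<longleftrightarrow> \<not> contains_pattern n w m p"

text \<open>The permutation of {1..length xs} given in one-line notation by xs.\<close>
definition perm_of_list :: "nat list \<Rightarrow> nat \<Rightarrow> nat" where
  "perm_of_list xs = (\<lambda>i. if 1 \<le> i \<and> i \<le> length xs then xs ! (i - 1) else i)"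

definition pat2413 :: "nat \<Rightarrow> nat" where "pat2413 = perm_of_list [2,4,1,3]"
definition pat4132 :: "nat \<Rightarrow> nat" where "pat4132 = perm_of_list [4,1,3,2]"
definition pat4213 :: "nat \<Rightarrow> nat" where "pat4213 = perm_of_list [4,2,1,3]"
definition pat3214 :: "nat \<Rightarrow> nat" where "pat3214 = perm_of_list [3,2,1,4]"

definition e :: "nat \<Rightarrow> nat" where
  "e n = card {w. w permutes {1..n} \<and> avoids n w 4 pat2413 \<and> avoids n w 4 pat4132
                 \<and> avoids n w 4 pat4213 \<and> avoids n w 4 pat3214}"

end

theory Submission
  imports Defs
begin


definition occ :: "(nat\<Rightarrow>nat\<Rightarrow>nat\<Rightarrow>nat\<Rightarrow>bool) \<Rightarrow> nat list \<Rightarrow> nat \<Rightarrow> nat \<Rightarrow> nat \<Rightarrow> nat \<Rightarrow> bool" where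
  "occ R xs a b c d \<longleftrightarrow> a<b \<and> b<c \<and> c<d \<and> d<length xs \<and> R (xs!a) (xs!b) (xs!c) (xs!d)"

definition cont :: "(nat\<Rightarrow>nat\<Rightarrow>nat\<Rightarrow>nat\<Rightarrow>bool) \<Rightarrow> nat list \<Rightarrow> bool" where
  "cont R xs \<longleftrightarrow> (\<exists>a b c d. occ R xs a b c d)"

definition R1 :: "nat\<Rightarrow>nat\<Rightarrow>nat\<Rightarrow>nat\<Rightarrow>bool" where "R1 p q r s \<longleftrightarrow> r<p \<and> p<s \<and> s<q"
definition R2 :: "nat\<Rightarrow>nat\<Rightarrow>nat\<Rightarrow>nat\<Rightarrow>bool" where "R2 p q r s \<longleftrightarrow> q<s \<and> s<r \<and> r<p"
definition R3 :: "nat\<Rightarrow>nat\<Rightarrow>nat\<Rightarrow>nat\<Rightarrow>bool" where "R3 p q r s \<longleftrightarrow> r<q \<and> q<s \<and> s<p"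
definition R4 :: "nat\<Rightarrow>nat\<Rightarrow>nat\<Rightarrow>nat\<Rightarrow>bool" where "R4 p q r s \<longleftrightarrow> r<q \<and> q<p \<and> p<s"

definition avoid :: "nat list \<Rightarrow> bool" where
  "avoid xs \<longleftrightarrow> \<not> cont R1 xs \<and> \<not> cont R2 xs \<and> \<not> cont R3 xs \<and> \<not> cont R4 xs"

definition Rs :: "(nat\<Rightarrow>nat\<Rightarrow>nat\<Rightarrow>nat\<Rightarrow>bool) set" where "Rs = {R1,R2,R3,R4}"

lemma avoid_Rs: "avoid xs \<longleftrightarrow> (\<forall>R\<in>Rs. \<not> cont R xs)"
  by (auto simp: avoid_def Rs_def)

definition rem :: "'a list \<Rightarrow> nat \<Rightarrow> 'a list" where
  "rem xs k = take k xs @ drop (Suc k) xs"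

lemma length_rem[simp]: "k < length xs \<Longrightarrow> length (rem xs k) = length xs - 1"
  by (simp add: rem_def)

lemma nth_rem: "k < length xs \<Longrightarrow> t < length xs - 1 \<Longrightarrow> rem xs k ! t = (if t < k then xs!t else xs!Suc t)"
  by (auto simp: rem_def nth_append min_def)

lemma cont_rem: assumes "k < length xs" "cont R (rem xs k)" shows "cont R xs"
proof -
  obtain a b c d where o: "occ R (rem xs k) a b c d" using assms(2) cont_def by blast
  define f where "f t = (if t < k then t else Suc t)" for t
  have len: "d < length xs - 1" using o assms(1) by (simp add: occ_def)
  have v: "\<And>t. t < length xs - 1 \<Longrightarrow> rem xs k ! t = xs ! f t" using assms(1) by (simp add: nth_rem f_def)
  have "occ R xs (f a) (f b) (f c) (f d)"
    using o len unfolding occ_def by (auto simp: v f_def)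
  then show ?thesis unfolding cont_def by blast
qed

lemma avoid_rem: "k < length xs \<Longrightarrow> avoid xs \<Longrightarrow> avoid (rem xs k)"
  using cont_rem unfolding avoid_def by blast

lemma occ_rem: assumes "occ R xs a b c d" "k < length xs" "k \<noteq> a" "k \<noteq> b" "k \<noteq> c" "k \<noteq> d"
  shows "cont R (rem xs k)"
proof -
  define f where "f t = (if t < k then t else t - 1)" for t
  have len: "d < length xs" "a<b" "b<c" "c<d" and RR: "R (xs!a) (xs!b) (xs!c) (xs!d)"
    using assms by (auto simp: occ_def)
  have v: "\<And>t. t < length xs \<Longrightarrow> t \<noteq> k \<Longrightarrow> rem xs k ! f t = xs ! t"
    using assms(2) by (auto simp: nth_rem f_def)
  have fl: "f a < f b" "f b < f c" "f c < f d" "f d < length xs - 1"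
    using len assms(2-6) by (auto simp: f_def)
  have "occ R (rem xs k) (f a) (f b) (f c) (f d)"
    unfolding occ_def using fl RR assms(2-6) len v[of a] v[of b] v[of c] v[of d] by simp
  then show ?thesis unfolding cont_def by blast
qed

definition oinv :: "(nat\<Rightarrow>nat\<Rightarrow>nat\<Rightarrow>nat\<Rightarrow>bool) \<Rightarrow> bool" where
  "oinv R \<longleftrightarrow> (\<forall>p q r s p' q' r' s'.
     (p<q \<longleftrightarrow> p'<q') \<and> (q<p \<longleftrightarrow> q'<p') \<and> (p<r \<longleftrightarrow> p'<r') \<and> (r<p \<longleftrightarrow> r'<p') \<and>
     (p<s \<longleftrightarrow> p'<s') \<and> (s<p \<longleftrightarrow> s'<p') \<and> (q<r \<longleftrightarrow> q'<r') \<and> (r<q \<longleftrightarrow> r'<q') \<and>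
     (q<s \<longleftrightarrow> q'<s') \<and> (s<q \<longleftrightarrow> s'<q') \<and> (r<s \<longleftrightarrow> r'<s') \<and> (s<r \<longleftrightarrow> s'<r')
     \<longrightarrow> R p q r s = R p' q' r' s')"

lemma oinv_Rs: "R \<in> Rs \<Longrightarrow> oinv R"
proof -
  have "oinv R1" unfolding oinv_def R1_def by (intro allI impI; elim conjE; simp)
  moreover have "oinv R2" unfolding oinv_def R2_def by (intro allI impI; elim conjE; simp)
  moreover have "oinv R3" unfolding oinv_def R3_def by (intro allI impI; elim conjE; simp)
  moreover have "oinv R4" unfolding oinv_def R4_def by (intro allI impI; elim conjE; simp)
  ultimately show "R \<in> Rs \<Longrightarrow> oinv R" unfolding Rs_def by blast
qed

lemma oinvD:
  assumes "oinv R"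
     "(p<q \<longleftrightarrow> p'<q')" "(q<p \<longleftrightarrow> q'<p')" "(p<r \<longleftrightarrow> p'<r')" "(r<p \<longleftrightarrow> r'<p')"
     "(p<s \<longleftrightarrow> p'<s')" "(s<p \<longleftrightarrow> s'<p')" "(q<r \<longleftrightarrow> q'<r')" "(r<q \<longleftrightarrow> r'<q')"
     "(q<s \<longleftrightarrow> q'<s')" "(s<q \<longleftrightarrow> s'<q')" "(r<s \<longleftrightarrow> r'<s')" "(s<r \<longleftrightarrow> s'<r')"
  shows "R p q r s = R p' q' r' s'"
  apply (rule assms(1)[unfolded oinv_def, rule_format])
  using assms(2-13) by (intro conjI)

lemma cont_cmp:
  assumes "oinv R" "length xs = length ys"
    "\<And>i j. i < length xs \<Longrightarrow> j < length xs \<Longrightarrow> (xs!i < xs!j) = (ys!i < ys!j)"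
  shows "cont R xs = cont R ys"
proof -
  have "occ R xs a b c d = occ R ys a b c d" for a b c d
  proof (cases "a<b \<and> b<c \<and> c<d \<and> d<length xs")
    case True
    then have i: "a < length xs" "b < length xs" "c < length xs" "d < length xs" by auto
    have "R (xs!a) (xs!b) (xs!c) (xs!d) = R (ys!a) (ys!b) (ys!c) (ys!d)"
      by (rule oinvD[OF assms(1)]; rule assms(3); simp add: i)
    then show ?thesis using True assms(2) unfolding occ_def by simp
  next
    case False
    then show ?thesis using assms(2) by (auto simp: occ_def)
  qed
  then show ?thesis by (simp add: cont_def)
qed

lemma avoid_cmp:
  assumes "length xs = length ys"
    "\<And>i j. i < length xs \<Longrightarrow> j < length xs \<Longrightarrow> (xs!i < xs!j) = (ys!i < ys!j)"
  shows "avoid xs = avoid ys"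
  using cont_cmp[OF oinv_Rs assms] unfolding avoid_Rs by blast




fun posn :: "nat \<Rightarrow> nat list \<Rightarrow> nat" where
  "posn x [] = 0"
| "posn x (y#ys) = (if y = x then 0 else Suc (posn x ys))"

lemma posn_lt: "x \<in> set w \<Longrightarrow> posn x w < length w"
  by (induction w) auto

lemma posn_nth: "x \<in> set w \<Longrightarrow> w ! posn x w = x"
  by (induction w) auto

lemma posn_unique: "distinct w \<Longrightarrow> i < length w \<Longrightarrow> w ! i = x \<Longrightarrow> posn x w = i"
proof (induction w arbitrary: i)
  case Nil then show ?case by simp
next
  case (Cons y ys) then show ?case by (cases i) auto
qed

definition ins :: "'a list \<Rightarrow> nat \<Rightarrow> 'a \<Rightarrow> 'a list" where
  "ins v i N = take i v @ N # drop i v"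

lemma length_ins[simp]: "i \<le> length v \<Longrightarrow> length (ins v i N) = Suc (length v)"
  by (simp add: ins_def)

lemma nth_ins: "i \<le> length v \<Longrightarrow> ins v i N ! t = (if t < i then v!t else if t = i then N else v!(t-1))"
proof -
  assume i: "i \<le> length v"
  show ?thesis
  proof (cases "t < i")
    case True then show ?thesis using i by (simp add: ins_def nth_append)
  next
    case False
    show ?thesis
    proof (cases "t = i")
      case True then show ?thesis using i by (simp add: ins_def nth_append)
    next
      case ne: False
      have "ins v i N ! t = (N # drop i v) ! (t - i)" using i False by (simp add: ins_def nth_append min_def)
      also have "\<dots> = drop i v ! (t - i - 1)" using False ne by (simp add: nth_Cons')
      also have "\<dots> = v ! (i + (t - i - 1))" using i by (simp add: nth_drop)
      also have "i + (t - i - 1) = t - 1" using False ne by simp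
      finally show ?thesis using False ne by simp
    qed
  qed
qed

lemma set_ins: "i \<le> length v \<Longrightarrow> set (ins v i N) = insert N (set v)"
proof -
  have "set v = set (take i v) \<union> set (drop i v)" by (metis append_take_drop_id set_append)
  then show ?thesis unfolding ins_def by auto
qed

lemma distinct_ins: "i \<le> length v \<Longrightarrow> distinct (ins v i N) \<longleftrightarrow> distinct v \<and> N \<notin> set v"
proof -
  have d: "distinct v = (distinct (take i v) \<and> distinct (drop i v) \<and> set (take i v) \<inter> set (drop i v) = {})"
    by (metis append_take_drop_id distinct_append)
  have s: "set v = set (take i v) \<union> set (drop i v)" by (metis append_take_drop_id set_append)
  show ?thesis unfolding ins_def distinct_append d using s by auto
qed

lemma rem_ins: "i \<le> length v \<Longrightarrow> rem (ins v i N) i = v"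
  unfolding rem_def ins_def by (simp add: min_def)

lemma ins_rem: assumes "k < length w" shows "ins (rem w k) k (w!k) = w"
proof -
  have "take k (rem w k) = take k w" "drop k (rem w k) = drop (Suc k) w"
    using assms unfolding rem_def by (simp_all add: min_def)
  then show ?thesis unfolding ins_def using id_take_nth_drop[OF assms] by simp
qed

definition relab :: "nat \<Rightarrow> nat \<Rightarrow> nat" where "relab x z = (if x < z then z - 1 else z)"
definition uplab :: "nat \<Rightarrow> nat \<Rightarrow> nat" where "uplab x z = (if x < z then Suc z else z)"

definition del :: "nat list \<Rightarrow> nat \<Rightarrow> nat list" where
  "del w k = map (relab (w!k)) (rem w k)"

definition dup :: "nat list \<Rightarrow> nat \<Rightarrow> nat list" where
  "dup u i = ins (map (uplab (u!i)) u) (Suc i) (Suc (u!i))"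

lemma strict_mono_on_avoid:
  assumes "strict_mono_on (set u) h" shows "avoid (map h u) = avoid u"
proof (rule avoid_cmp)
  show "length (map h u) = length u" by simp
  fix i j assume "i < length (map h u)" "j < length (map h u)"
  then show "(map h u ! i < map h u ! j) = (u ! i < u ! j)"
    using assms by (simp add: strict_mono_on_less)
qed

lemma avoid_del: assumes "avoid w" "distinct w" "k < length w" shows "avoid (del w k)"
proof -
  have "avoid (rem w k)" using avoid_rem assms by blast
  moreover have "w!k \<notin> set (rem w k)"
  proof -
    have "distinct (take k w @ w!k # drop (Suc k) w)" using assms(2,3) id_take_nth_drop by metis
    then show ?thesis unfolding rem_def by auto
  qed
  then have ne: "\<And>r. r \<in> set (rem w k) \<Longrightarrow> r \<noteq> w!k" by blast
  have "strict_mono_on (set (rem w k)) (relab (w!k))"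
    unfolding strict_mono_on_def relab_def
  proof (intro allI impI)
    fix r s assume "r \<in> set (rem w k) \<and> s \<in> set (rem w k) \<and> r < s"
    then show "(if w ! k < r then r - 1 else r) < (if w ! k < s then s - 1 else s)"
      using ne[of r] ne[of s] by auto
  qed
  ultimately show ?thesis unfolding del_def using strict_mono_on_avoid by blast
qed




lemma occ_uses: "occ R w a b c d \<Longrightarrow> k < length w \<Longrightarrow> \<not> cont R (rem w k) \<Longrightarrow> k = a \<or> k = b \<or> k = c \<or> k = d"
  using occ_rem by blast

lemma R_noadj: "R \<in> Rs \<Longrightarrow> R p q r s \<Longrightarrow> q \<noteq> Suc p \<and> r \<noteq> Suc q \<and> s \<noteq> Suc r"
  unfolding Rs_def R1_def R2_def R3_def R4_def by auto

lemma R_top21: "R \<in> Rs \<Longrightarrow> R p q r s \<Longrightarrow> \<not>(q<p \<and> r<q \<and> s<q) \<and> \<not>(r<q \<and> p<r \<and> s<r) \<and> \<not>(s<r \<and> p<s \<and> q<s)"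
  unfolding Rs_def R1_def R2_def R3_def R4_def by auto

lemma R_wrap: "R \<in> Rs \<Longrightarrow> R p q r s \<Longrightarrow>
   \<not>(p<q \<and> r<p \<and> s<p) \<and> \<not>(q<r \<and> p<q \<and> s<q) \<and> \<not>(r<s \<and> p<r \<and> q<r) \<and>
   \<not>(p<r \<and> q<p \<and> s<p) \<and> \<not>(q<s \<and> p<q \<and> r<q)"
  unfolding Rs_def R1_def R2_def R3_def R4_def by auto

lemma nth_rem': "k < length xs \<Longrightarrow> t < length xs - 1 \<Longrightarrow> rem xs k ! t = (if t < k then xs!t else xs!Suc t)"
  by (rule nth_rem)

lemma avoid_dup:
  assumes "avoid u" "distinct u" "i < length u"
  shows "avoid (dup u i)"
proof -
  define x where "x = u!i"
  define u' where "u' = map (uplab x) u"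
  define w where "w = dup u i"
  have w: "w = ins u' (Suc i) (Suc x)" unfolding w_def dup_def u'_def x_def by simp
  have lu': "length u' = length u" by (simp add: u'_def)
  have lw: "length w = Suc (length u)" using assms(3) by (simp add: w lu')
  have smu: "strict_mono (uplab x)" unfolding strict_mono_def uplab_def by auto
  have r1: "rem w (Suc i) = u'" using assms(3) by (simp add: w rem_ins lu')
  have a1: "avoid (rem w (Suc i))" unfolding r1 u'_def
    using strict_mono_on_avoid[of u "uplab x"] smu assms(1) by (simp add: strict_mono_on_def strict_mono_def)
  define h where "h z = (if z = x then Suc x else uplab x z)" for z
  have smh: "strict_mono h" unfolding strict_mono_def h_def uplab_def by auto
  have nw: "\<And>t. t < Suc (length u) \<Longrightarrow> w ! t = (if t < Suc i then uplab x (u!t) else if t = Suc i then Suc x else uplab x (u!(t-1)))"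
    using assms(3) by (simp add: w nth_ins lu' u'_def)
  have ux: "\<And>t. t < length u \<Longrightarrow> t \<noteq> i \<Longrightarrow> u!t \<noteq> x"
    unfolding x_def using assms(2,3) nth_eq_iff_index_eq by blast
  have r2: "rem w i = map h u"
  proof (rule nth_equalityI)
    show "length (rem w i) = length (map h u)" using lw assms(3) by simp
    fix t assume "t < length (rem w i)"
    then have t: "t < length u" using lw assms(3) by simp
    show "rem w i ! t = map h u ! t"
      using t assms(3) ux[of t] by (simp add: nth_rem lw nw h_def x_def)
  qed
  have a2: "avoid (rem w i)" unfolding r2
    using strict_mono_on_avoid[of u h] smh assms(1) by (simp add: strict_mono_on_def strict_mono_def)
  have wi: "w!i = x" "w!(Suc i) = Suc x" using nw[of i] nw[of "Suc i"] assms(3) by (simp_all add: uplab_def x_def)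
  show ?thesis unfolding w_def[symmetric] avoid_Rs
  proof (intro ballI notI)
    fix R assume R: "R \<in> Rs" and "cont R w"
    then obtain a b c d where o: "occ R w a b c d" unfolding cont_def by blast
    have nc1: "\<not> cont R (rem w i)" using a1 a2 R unfolding avoid_Rs by blast
    have nc2: "\<not> cont R (rem w (Suc i))" using a1 R unfolding avoid_Rs by blast
    have u1: "i = a \<or> i = b \<or> i = c \<or> i = d" using occ_uses[OF o _ nc1] lw assms(3) by simp
    have u2: "Suc i = a \<or> Suc i = b \<or> Suc i = c \<or> Suc i = d" using occ_uses[OF o _ nc2] lw assms(3) by simp
    have ord: "a<b" "b<c" "c<d" and RR: "R (w!a) (w!b) (w!c) (w!d)" using o by (auto simp: occ_def)
    have "(a = i \<and> b = Suc i) \<or> (b = i \<and> c = Suc i) \<or> (c = i \<and> d = Suc i)" using u1 u2 ord by auto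
    then show False using R_noadj[OF R RR] wi by auto
  qed
qed

lemma strict_mono_on_avoid':
  assumes "strict_mono_on (set u) h" "avoid u" shows "avoid (map h u)"
  using strict_mono_on_avoid[OF assms(1)] assms(2) by simp

lemma avoid_ins21:
  assumes "avoid u" "distinct u" "p < length u" "\<forall>z\<in>set u. z \<le> u!p" "u!p < N"
  shows "avoid (ins u p N)"
proof -
  define M where "M = u!p"
  define w where "w = ins u p N"
  have lw: "length w = Suc (length u)" using assms(3) by (simp add: w_def)
  have nw: "\<And>t. w ! t = (if t < p then u!t else if t = p then N else u!(t-1))"
    using assms(3) by (simp add: w_def nth_ins)
  have r1: "rem w p = u" using assms(3) by (simp add: w_def rem_ins)
  define h where "h z = (if z = M then N else z)" for z
  have uM: "\<And>t. t < length u \<Longrightarrow> t \<noteq> p \<Longrightarrow> u!t < M"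
    using assms(2-4) unfolding M_def by (metis nth_eq_iff_index_eq nth_mem order_le_imp_less_or_eq)
  have r2: "rem w (Suc p) = map h u"
  proof (rule nth_equalityI)
    show "length (rem w (Suc p)) = length (map h u)" using lw assms(3) by simp
    fix t assume "t < length (rem w (Suc p))"
    then have t: "t < length u" using lw assms(3) by simp
    show "rem w (Suc p) ! t = map h u ! t"
      using t assms(3) uM[of t] by (cases "t < p"; cases "t = p"; auto simp: nth_rem lw nw h_def M_def)
  qed
  have smh: "strict_mono_on (set u) h"
    unfolding strict_mono_on_def h_def using assms(4,5) unfolding M_def[symmetric] by auto
  have a1: "avoid (rem w p)" using r1 assms(1) by simp
  have a2: "avoid (rem w (Suc p))" unfolding r2 using strict_mono_on_avoid'[OF smh assms(1)] .
  have wp: "w!p = N" "w!(Suc p) = M" using nw M_def by auto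
  have wo: "\<And>t. t < length w \<Longrightarrow> t \<noteq> p \<Longrightarrow> t \<noteq> Suc p \<Longrightarrow> w!t < M"
    using uM lw assms(3) by (auto simp: nw)
  show ?thesis unfolding w_def[symmetric] avoid_Rs
  proof (intro ballI notI)
    fix R assume R: "R \<in> Rs" and "cont R w"
    then obtain a b c d where o: "occ R w a b c d" unfolding cont_def by blast
    have nc1: "\<not> cont R (rem w p)" using a1 R unfolding avoid_Rs by blast
    have nc2: "\<not> cont R (rem w (Suc p))" using a2 R unfolding avoid_Rs by blast
    have u1: "p = a \<or> p = b \<or> p = c \<or> p = d" using occ_uses[OF o _ nc1] lw assms(3) by simp
    have u2: "Suc p = a \<or> Suc p = b \<or> Suc p = c \<or> Suc p = d" using occ_uses[OF o _ nc2] lw assms(3) by simp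
    have ord: "a<b" "b<c" "c<d" "d < length w" and RR: "R (w!a) (w!b) (w!c) (w!d)" using o by (auto simp: occ_def)
    have MN: "M < N" using assms(5) M_def by simp
    have "(a = p \<and> b = Suc p) \<or> (b = p \<and> c = Suc p) \<or> (c = p \<and> d = Suc p)" using u1 u2 ord by auto
    then show False
    proof (elim disjE conjE)
      assume "a = p" "b = Suc p"
      then show False using R_top21[OF R RR] wp wo[of c] wo[of d] ord MN by auto
    next
      assume "b = p" "c = Suc p"
      then show False using R_top21[OF R RR] wp wo[of a] wo[of d] ord MN by auto
    next
      assume "c = p" "d = Suc p"
      then show False using R_top21[OF R RR] wp wo[of a] wo[of b] ord MN by auto
    qed
  qed
qed

definition wrap :: "nat list \<Rightarrow> nat \<Rightarrow> nat \<Rightarrow> nat \<Rightarrow> nat list" where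
  "wrap v i M N = ins (ins v i M) (Suc (Suc i)) N"

lemma length_wrap: "i < length v \<Longrightarrow> length (wrap v i M N) = length v + 2"
  by (simp add: wrap_def)

lemma nth_wrap: "i < length v \<Longrightarrow> wrap v i M N ! t =
   (if t < i then v!t else if t = i then M else if t = Suc i then v!i else if t = Suc (Suc i) then N else v!(t-2))"
  by (cases "t < i"; cases "t = i"; cases "t = Suc i"; cases "t = Suc (Suc i)"; simp add: wrap_def nth_ins numeral_2_eq_2; arith?)

lemma avoid_wrap:
  assumes "distinct v" "i < length v" "\<forall>z\<in>set v. z < M" "M < N"
    "avoid (ins v i M)" "avoid (ins v (Suc i) M)"
  shows "avoid (wrap v i M N)"
proof -
  define w where "w = wrap v i M N"
  have lw: "length w = length v + 2" using assms(2) by (simp add: w_def length_wrap)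
  have nw: "\<And>t. w ! t = (if t < i then v!t else if t = i then M else if t = Suc i then v!i else if t = Suc (Suc i) then N else v!(t-2))"
    using assms(2) by (simp add: w_def nth_wrap)
  have r1: "rem w (Suc (Suc i)) = ins v i M" using assms(2) by (simp add: w_def wrap_def rem_ins)
  define h where "h z = (if z = M then N else z)" for z
  have r2: "rem w i = map h (ins v (Suc i) M)"
  proof (rule nth_equalityI)
    show "length (rem w i) = length (map h (ins v (Suc i) M))" using lw assms(2) by simp
    fix t assume "t < length (rem w i)"
    then have t: "t < Suc (length v)" using lw assms(2) by simp
    have vM: "\<And>s. s < length v \<Longrightarrow> v!s \<noteq> M" using assms(3) nth_mem by fastforce
    show "rem w i ! t = map h (ins v (Suc i) M) ! t"
      using t assms(2) vM by (cases "t < i"; cases "t = i"; cases "t = Suc i"; auto simp: nth_rem lw nw h_def nth_ins)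
  qed
  have smh: "strict_mono_on (set (ins v (Suc i) M)) h"
    using assms(2-4) unfolding strict_mono_on_def h_def by (auto simp: set_ins)
  have a1: "avoid (rem w (Suc (Suc i)))" using r1 assms(5) by simp
  have a2: "avoid (rem w i)" unfolding r2 using strict_mono_on_avoid'[OF smh assms(6)] .
  have wp: "w!i = M" "w!(Suc (Suc i)) = N" using nw by auto
  have wo: "\<And>t. t < length w \<Longrightarrow> t \<noteq> i \<Longrightarrow> t \<noteq> Suc (Suc i) \<Longrightarrow> w!t < M"
    using lw assms(2,3) by (auto simp: nw)
  show ?thesis unfolding w_def[symmetric] avoid_Rs
  proof (intro ballI notI)
    fix R assume R: "R \<in> Rs" and "cont R w"
    then obtain a b c d where o: "occ R w a b c d" unfolding cont_def by blast
    have nc1: "\<not> cont R (rem w i)" using a2 R unfolding avoid_Rs by blast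
    have nc2: "\<not> cont R (rem w (Suc (Suc i)))" using a1 R unfolding avoid_Rs by blast
    have u1: "i = a \<or> i = b \<or> i = c \<or> i = d" using occ_uses[OF o _ nc1] lw assms(2) by simp
    have u2: "Suc (Suc i) = a \<or> Suc (Suc i) = b \<or> Suc (Suc i) = c \<or> Suc (Suc i) = d" using occ_uses[OF o _ nc2] lw assms(2) by simp
    have ord: "a<b" "b<c" "c<d" "d < length w" and RR: "R (w!a) (w!b) (w!c) (w!d)" using o by (auto simp: occ_def)
    have "(a = i \<and> b = Suc (Suc i)) \<or> (a = i \<and> c = Suc (Suc i)) \<or> (b = i \<and> c = Suc (Suc i)) \<or>
          (b = i \<and> d = Suc (Suc i)) \<or> (c = i \<and> d = Suc (Suc i))" using u1 u2 ord by auto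
    then show False
    proof (elim disjE conjE)
      assume "a = i" "b = Suc (Suc i)"
      then show False using R_wrap[OF R RR] wp wo[of c] wo[of d] ord assms(4) by auto
    next
      assume "a = i" "c = Suc (Suc i)"
      then show False using R_wrap[OF R RR] wp wo[of b] wo[of d] ord assms(4) by auto
    next
      assume "b = i" "c = Suc (Suc i)"
      then show False using R_wrap[OF R RR] wp wo[of a] wo[of d] ord assms(4) by auto
    next
      assume "b = i" "d = Suc (Suc i)"
      then show False using R_wrap[OF R RR] wp wo[of a] wo[of c] ord assms(4) by auto
    next
      assume "c = i" "d = Suc (Suc i)"
      then show False using R_wrap[OF R RR] wp wo[of a] wo[of b] ord assms(4) by auto
    qed
  qed
qed

lemma avoid_convex:
  assumes "distinct v" "\<forall>z\<in>set v. z < N" "i < k" "k < j" "j \<le> length v" "avoid v"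
    "avoid (ins v i N)" "avoid (ins v j N)"
  shows "avoid (ins v k N)"
proof -
  define w where "w = ins v k N"
  have lw: "length w = Suc (length v)" using assms by (simp add: w_def)
  have nw: "\<And>t. w ! t = (if t < k then v!t else if t = k then N else v!(t-1))"
    using assms by (simp add: w_def nth_ins)
  have ni: "\<And>t. ins v i N ! t = (if t < i then v!t else if t = i then N else v!(t-1))"
    using assms by (simp add: nth_ins)
  have nj: "\<And>t. ins v j N ! t = (if t < j then v!t else if t = j then N else v!(t-1))"
    using assms by (simp add: nth_ins)
  have li: "length (ins v i N) = Suc (length v)" "length (ins v j N) = Suc (length v)" using assms by auto
  have r1: "rem w k = v" using assms by (simp add: w_def rem_ins)
  have vN: "\<And>s. s < length v \<Longrightarrow> v!s < N" using assms(2) nth_mem by blast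
  have wo: "\<And>t. t < length w \<Longrightarrow> t \<noteq> k \<Longrightarrow> w!t < N"
    using lw assms(3-5) by (auto simp: nw vN)
  have wk: "w!k = N" by (simp add: nw)
  show ?thesis unfolding w_def[symmetric] avoid_def
  proof (intro conjI notI)
    assume "cont R1 w"
    then obtain a b c d where o: "occ R1 w a b c d" unfolding cont_def by blast
    have ord: "a<b" "b<c" "c<d" "d < length w" and RR: "w!c < w!a" "w!a < w!d" "w!d < w!b"
      using o by (auto simp: occ_def R1_def)
    have "k = a \<or> k = b \<or> k = c \<or> k = d" using occ_uses[OF o] r1 assms(6) lw avoid_def assms by auto
    then have kb: "k = b" using wk wo ord RR by (metis less_trans not_less_iff_gr_or_eq)
    show False
    proof (cases "a < i")
      case True
      have "occ R1 (ins v i N) a i c d"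
        unfolding occ_def R1_def using True ord RR kb assms(3,4) li lw by (auto simp: nw ni)
      then show False using assms(7) unfolding avoid_def cont_def by blast
    next
      case False
      have "occ R3 (ins v i N) i (Suc a) c d"
        unfolding occ_def R3_def using False ord RR kb assms(3,4) li lw wk by (auto simp: nw ni)
      then show False using assms(7) unfolding avoid_def cont_def by blast
    qed
  next
    assume "cont R2 w"
    then obtain a b c d where o: "occ R2 w a b c d" unfolding cont_def by blast
    have ord: "a<b" "b<c" "c<d" "d < length w" and RR: "w!b < w!d" "w!d < w!c" "w!c < w!a"
      using o by (auto simp: occ_def R2_def)
    have "k = a \<or> k = b \<or> k = c \<or> k = d" using occ_uses[OF o] r1 assms(6) lw avoid_def assms by auto
    then have ka: "k = a" using wk wo ord RR by (metis less_trans not_less_iff_gr_or_eq)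
    have "occ R2 (ins v i N) i b c d"
      unfolding occ_def R2_def using ord RR ka assms(3,4) li lw by (auto simp: nw ni)
    then show False using assms(7) unfolding avoid_def cont_def by blast
  next
    assume "cont R3 w"
    then obtain a b c d where o: "occ R3 w a b c d" unfolding cont_def by blast
    have ord: "a<b" "b<c" "c<d" "d < length w" and RR: "w!c < w!b" "w!b < w!d" "w!d < w!a"
      using o by (auto simp: occ_def R3_def)
    have "k = a \<or> k = b \<or> k = c \<or> k = d" using occ_uses[OF o] r1 assms(6) lw avoid_def assms by auto
    then have ka: "k = a" using wk wo ord RR by (metis less_trans not_less_iff_gr_or_eq)
    have "occ R3 (ins v i N) i b c d"
      unfolding occ_def R3_def using ord RR ka assms(3,4) li lw by (auto simp: nw ni)
    then show False using assms(7) unfolding avoid_def cont_def by blast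
  next
    assume "cont R4 w"
    then obtain a b c d where o: "occ R4 w a b c d" unfolding cont_def by blast
    have ord: "a<b" "b<c" "c<d" "d < length w" and RR: "w!c < w!b" "w!b < w!a" "w!a < w!d"
      using o by (auto simp: occ_def R4_def)
    have "k = a \<or> k = b \<or> k = c \<or> k = d" using occ_uses[OF o] r1 assms(6) lw avoid_def assms by auto
    then have kd: "k = d" using wk wo ord RR by (metis less_trans not_less_iff_gr_or_eq)
    have "occ R4 (ins v j N) a b c j"
      unfolding occ_def R4_def using ord RR kd assms(3,4,5) li lw by (auto simp: nw nj)
    then show False using assms(8) unfolding avoid_def cont_def by blast
  qed
qed




definition Av :: "nat \<Rightarrow> nat list set" where
  "Av n = {w. distinct w \<and> set w = {1..n} \<and> avoid w}"

lemma Av_len: "w \<in> Av n \<Longrightarrow> length w = n"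
  unfolding Av_def by (metis (mono_tags, lifting) card_atLeastAtMost diff_Suc_1 distinct_card mem_Collect_eq)

lemma len_perm: "distinct w \<Longrightarrow> set w = {1..n} \<Longrightarrow> length w = n"
  by (metis card_atLeastAtMost diff_Suc_1 distinct_card)

lemma finite_Av: "finite (Av n)"
proof -
  have "Av n \<subseteq> {xs. set xs \<subseteq> {1..n} \<and> length xs = n}" using Av_len unfolding Av_def by auto
  moreover have "finite {xs. set xs \<subseteq> {1..n} \<and> length xs = n}" by (rule finite_lists_length_eq) simp
  ultimately show ?thesis by (rule finite_subset)
qed

lemma rig1:
  assumes "distinct w" "set w = {1..n}" "avoid w" "P < length w" "Q < length w"
    "w!P = n" "w!Q = n - 1" "Suc (Suc P) \<le> Q"
  shows "w!(Suc (Suc P)) = Suc (w!(Suc P))"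
proof (rule ccontr)
  assume ne: "w!(Suc (Suc P)) \<noteq> Suc (w!(Suc P))"
  define x where "x = w!(Suc P)"
  define y where "y = w!(Suc (Suc P))"
  have ln: "length w = n" using len_perm assms(1,2) by blast
  have inj: "\<And>s t. s < length w \<Longrightarrow> t < length w \<Longrightarrow> w!s = w!t \<Longrightarrow> s = t"
    using assms(1) nth_eq_iff_index_eq by blast
  have rng: "\<And>t. t < length w \<Longrightarrow> w!t \<in> {1..n}" using assms(2) nth_mem by blast
  have xr: "x \<noteq> n" "x \<noteq> n - 1" using inj[of "Suc P" P] inj[of "Suc P" Q] assms(4-8) unfolding x_def by auto
  have x1: "x \<in> {1..n}" using rng[of "Suc P"] assms(5,8) unfolding x_def by simp
  have yr: "y \<noteq> n" "y \<noteq> x" using inj[of "Suc (Suc P)" P] inj[of "Suc (Suc P)" "Suc P"] assms(4-8) unfolding x_def y_def by auto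
  have y1: "y \<in> {1..n}" using rng[of "Suc (Suc P)"] assms(5,8) unfolding y_def by simp
  show False
  proof (cases "y < x")
    case True
    then have "Q \<noteq> Suc (Suc P)" using assms(7) xr x1 y_def by auto
    then have "occ R3 w P (Suc P) (Suc (Suc P)) Q"
      unfolding occ_def R3_def using True assms(5-8) xr x1 y1 unfolding x_def y_def by auto
    then show False using assms(3) unfolding avoid_def cont_def by blast
  next
    case False
    then have xy: "Suc x < y" using ne yr unfolding x_def y_def by auto
    then have "Suc x \<in> set w" using assms(2) y1 x1 by auto
    then obtain t where t: "t < length w" "w!t = Suc x" by (metis in_set_conv_nth)
    have tn: "t \<noteq> P" "t \<noteq> Suc P" "t \<noteq> Suc (Suc P)" using t xy yr assms(6) y1 unfolding x_def y_def by auto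
    show False
    proof (cases "t < P")
      case True
      have "occ R1 w t P (Suc P) (Suc (Suc P))"
        unfolding occ_def R1_def using True t xy assms(5,6,8) yr y1 unfolding x_def y_def by auto
      then show False using assms(3) unfolding avoid_def cont_def by blast
    next
      case False
      then have "Suc (Suc P) < t" using tn by auto
      then have "occ R2 w P (Suc P) (Suc (Suc P)) t"
        unfolding occ_def R2_def using t xy assms(5,6,8) yr y1 unfolding x_def y_def by auto
      then show False using assms(3) unfolding avoid_def cont_def by blast
    qed
  qed
qed

lemma rig2:
  assumes "distinct w" "set w = {1..n}" "avoid w" "P < length w" "Q < length w"
    "w!P = n" "w!Q = n - 1" "Suc (Suc (Suc Q)) \<le> P"
  shows "w!(Suc (Suc Q)) = Suc (w!(Suc Q))"
proof (rule ccontr)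
  assume ne: "w!(Suc (Suc Q)) \<noteq> Suc (w!(Suc Q))"
  define x where "x = w!(Suc Q)"
  define y where "y = w!(Suc (Suc Q))"
  have inj: "\<And>s t. s < length w \<Longrightarrow> t < length w \<Longrightarrow> w!s = w!t \<Longrightarrow> s = t"
    using assms(1) nth_eq_iff_index_eq by blast
  have rng: "\<And>t. t < length w \<Longrightarrow> w!t \<in> {1..n}" using assms(2) nth_mem by blast
  have xr: "x \<noteq> n" "x \<noteq> n - 1" using inj[of "Suc Q" P] inj[of "Suc Q" Q] assms(4-8) unfolding x_def by auto
  have x1: "x \<in> {1..n}" using rng[of "Suc Q"] assms(4,8) unfolding x_def by simp
  have yr: "y \<noteq> n" "y \<noteq> x" "y \<noteq> n - 1"
    using inj[of "Suc (Suc Q)" P] inj[of "Suc (Suc Q)" "Suc Q"] inj[of "Suc (Suc Q)" Q] assms(4-8)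
    unfolding x_def y_def by auto
  have y1: "y \<in> {1..n}" using rng[of "Suc (Suc Q)"] assms(4,8) unfolding y_def by simp
  show False
  proof (cases "y < x")
    case True
    have "occ R4 w Q (Suc Q) (Suc (Suc Q)) P"
      unfolding occ_def R4_def using True assms(4-8) xr x1 y1 unfolding x_def y_def by auto
    then show False using assms(3) unfolding avoid_def cont_def by blast
  next
    case False
    then have xy: "Suc x < y" using ne yr unfolding x_def y_def by auto
    then have "Suc x \<in> set w" using assms(2) y1 x1 by auto
    then obtain t where t: "t < length w" "w!t = Suc x" by (metis in_set_conv_nth)
    have tn: "t \<noteq> Q" "t \<noteq> Suc Q" "t \<noteq> Suc (Suc Q)" using t xy yr assms(7) y1 x1 unfolding x_def y_def by auto
    show False
    proof (cases "t < Q")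
      case True
      have "occ R1 w t Q (Suc Q) (Suc (Suc Q))"
        unfolding occ_def R1_def using True t xy assms(4,7,8) yr y1 unfolding x_def y_def by auto
      then show False using assms(3) unfolding avoid_def cont_def by blast
    next
      case False
      then have "Suc (Suc Q) < t" using tn by auto
      then have "occ R2 w Q (Suc Q) (Suc (Suc Q)) t"
        unfolding occ_def R2_def using t xy assms(4,7,8) yr y1 unfolding x_def y_def by auto
      then show False using assms(3) unfolding avoid_def cont_def by blast
    qed
  qed
qed




lemma set_rem: "distinct w \<Longrightarrow> k < length w \<Longrightarrow> set (rem w k) = set w - {w!k}"
proof -
  assume a: "distinct w" "k < length w"
  have "distinct (take k w @ w!k # drop (Suc k) w)" using a id_take_nth_drop by metis
  moreover have "set w = set (take k w) \<union> insert (w!k) (set (drop (Suc k) w))"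
    using a id_take_nth_drop by (metis list.simps(15) set_append)
  ultimately show ?thesis unfolding rem_def by auto
qed

lemma distinct_rem: "distinct w \<Longrightarrow> k < length w \<Longrightarrow> distinct (rem w k)"
proof -
  assume a: "distinct w" "k < length w"
  have "distinct (take k w @ w!k # drop (Suc k) w)" using a id_take_nth_drop by metis
  then show ?thesis unfolding rem_def by auto
qed

lemma nth_del: "k < length w \<Longrightarrow> t < length w - 1 \<Longrightarrow> del w k ! t = relab (w!k) (if t < k then w!t else w!Suc t)"
  by (simp add: del_def nth_rem)

lemma length_del[simp]: "k < length w \<Longrightarrow> length (del w k) = length w - 1"
  by (simp add: del_def)

lemma del_perm:
  assumes "distinct w" "set w = {1..n}" "k < length w"
  shows "distinct (del w k) \<and> set (del w k) = {1..n-1}"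
proof -
  define x where "x = w!k"
  have x: "x \<in> {1..n}" using assms nth_mem x_def by blast
  have sr: "set (rem w k) = {1..n} - {x}" using set_rem[OF assms(1,3)] assms(2) x_def by simp
  have inj: "inj_on (relab x) (set (rem w k))"
    unfolding inj_on_def relab_def sr by auto
  have "relab x ` ({1..n} - {x}) = {1..n-1}"
  proof
    show "relab x ` ({1..n} - {x}) \<subseteq> {1..n-1}" using x unfolding relab_def by auto
    show "{1..n-1} \<subseteq> relab x ` ({1..n} - {x})"
    proof
      fix y assume y: "y \<in> {1..n-1}"
      show "y \<in> relab x ` ({1..n} - {x})"
      proof (cases "y < x")
        case True then have "relab x y = y" "y \<in> {1..n} - {x}" using y unfolding relab_def by auto
        then show ?thesis by (metis image_eqI)
      next
        case False then have "relab x (Suc y) = y" "Suc y \<in> {1..n} - {x}" using y x unfolding relab_def by auto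
        then show ?thesis by (metis image_eqI)
      qed
    qed
  qed
  then show ?thesis unfolding del_def x_def[symmetric]
    using distinct_rem[OF assms(1,3)] inj sr by (simp add: distinct_map)
qed

lemma nth_dup: "i < length u \<Longrightarrow> t \<le> length u \<Longrightarrow>
   dup u i ! t = (if t \<le> i then uplab (u!i) (u!t) else if t = Suc i then Suc (u!i) else uplab (u!i) (u!(t-1)))"
  by (auto simp: dup_def nth_ins)

lemma length_dup[simp]: "i < length u \<Longrightarrow> length (dup u i) = Suc (length u)"
  by (simp add: dup_def)

lemma dup_perm:
  assumes "distinct u" "set u = {1..m}" "i < length u"
  shows "distinct (dup u i) \<and> set (dup u i) = {1..Suc m}"
proof -
  define x where "x = u!i"
  have x: "x \<in> {1..m}" using assms nth_mem x_def by blast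
  have inj: "inj (uplab x)" unfolding inj_def uplab_def by auto
  have nx: "Suc x \<notin> uplab x ` {1..m}" unfolding uplab_def by auto
  have im: "insert (Suc x) (uplab x ` {1..m}) = {1..Suc m}"
  proof
    show "insert (Suc x) (uplab x ` {1..m}) \<subseteq> {1..Suc m}" using x unfolding uplab_def by auto
    show "{1..Suc m} \<subseteq> insert (Suc x) (uplab x ` {1..m})"
    proof
      fix y assume y: "y \<in> {1..Suc m}"
      show "y \<in> insert (Suc x) (uplab x ` {1..m})"
      proof (cases "y \<le> x")
        case True then have "uplab x y = y" "y \<in> {1..m}" using y x unfolding uplab_def by auto
        then show ?thesis by (metis image_eqI insertI2)
      next
        case False
        show ?thesis
        proof (cases "y = Suc x")
          case True then show ?thesis by simp
        next
          case False2: False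
          then have "uplab x (y - 1) = y" "y - 1 \<in> {1..m}" using y x False unfolding uplab_def by auto
          then show ?thesis by (metis image_eqI insertI2)
        qed
      qed
    qed
  qed
  show ?thesis unfolding dup_def x_def[symmetric]
    using assms(1,3) inj nx im by (simp add: distinct_ins set_ins distinct_map inj_on_def assms(2))
qed

lemma del_dup:
  assumes "distinct u" "i < length u"
  shows "del (dup u i) i = u"
proof (rule nth_equalityI)
  show "length (del (dup u i) i) = length u" using assms by simp
  fix t assume "t < length (del (dup u i) i)"
  then have t: "t < length u" using assms by simp
  have ne: "t \<noteq> i \<Longrightarrow> u!t \<noteq> u!i" using assms t nth_eq_iff_index_eq by blast
  have di: "dup u i ! i = u!i" using assms by (simp add: nth_dup uplab_def)
  show "del (dup u i) i ! t = u ! t"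
    using assms t ne by (cases "t < i"; cases "t = i"; auto simp: nth_del nth_dup di relab_def uplab_def)
qed

lemma dup_del:
  assumes "distinct w" "Suc k < length w" "w!(Suc k) = Suc (w!k)"
  shows "dup (del w k) k = w"
proof (rule nth_equalityI)
  show "length (dup (del w k) k) = length w" using assms by simp
  fix t assume "t < length (dup (del w k) k)"
  then have t: "t < length w" using assms by simp
  have ne: "t \<noteq> k \<Longrightarrow> w!t \<noteq> w!k" "t \<noteq> Suc k \<Longrightarrow> w!t \<noteq> w!Suc k"
    using assms t nth_eq_iff_index_eq[OF assms(1) t, of k] nth_eq_iff_index_eq[OF assms(1) t, of "Suc k"] by auto
  have dk: "del w k ! k = w!k" using assms by (simp add: nth_del relab_def)
  have nd: "\<And>s. s < length w - 1 \<Longrightarrow> del w k ! s = relab (w!k) (if s < k then w!s else w!Suc s)"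
    using assms by (simp add: nth_del)
  show "dup (del w k) k ! t = w ! t"
  proof (cases "t \<le> k")
    case True
    then show ?thesis using assms t ne nd[of t] dk by (auto simp: nth_dup relab_def uplab_def)
  next
    case False
    then show ?thesis using assms t ne nd[of "t - 1"] dk by (cases "t = Suc k"; auto simp: nth_dup relab_def uplab_def)
  qed
qed




definition S :: "nat \<Rightarrow> (nat \<Rightarrow> nat \<Rightarrow> bool) \<Rightarrow> nat list set" where
  "S n r = {w \<in> Av n. r (posn n w) (posn (n-1) w)}"

lemma AvD: assumes "w \<in> Av n" shows "distinct w" "set w = {1..n}" "avoid w" "length w = n"
  using assms Av_len unfolding Av_def by auto

lemma AvI: "distinct w \<Longrightarrow> set w = {1..n} \<Longrightarrow> avoid w \<Longrightarrow> w \<in> Av n"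
  unfolding Av_def by auto

lemma finite_S: "finite (S n r)" unfolding S_def using finite_Av by simp

lemma posn_facts:
  assumes "w \<in> Av n" "x \<in> {1..n}"
  shows "posn x w < n" "w ! posn x w = x"
proof -
  have "x \<in> set w" using AvD(2)[OF assms(1)] assms(2) by simp
  then show "posn x w < n" "w ! posn x w = x" using posn_lt posn_nth AvD(4)[OF assms(1)] by auto
qed

lemma card_split: "finite X \<Longrightarrow> card X = card {x\<in>X. A x} + card {x\<in>X. \<not> A x}"
proof -
  assume f: "finite X"
  have "X = {x\<in>X. A x} \<union> {x\<in>X. \<not> A x}" by auto
  moreover have "{x\<in>X. A x} \<inter> {x\<in>X. \<not> A x} = {}" by auto
  moreover have "finite {x\<in>X. A x}" "finite {x\<in>X. \<not> A x}" using f by auto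
  ultimately show ?thesis using card_Un_disjoint[of "{x\<in>X. A x}" "{x\<in>X. \<not> A x}"] by simp
qed

lemma S_split: "card (S n r) = card (S n (\<lambda>P Q. r P Q \<and> A P Q)) + card (S n (\<lambda>P Q. r P Q \<and> \<not> A P Q))"
proof -
  have "card (S n r) = card {w\<in>S n r. A (posn n w) (posn (n-1) w)} + card {w\<in>S n r. \<not> A (posn n w) (posn (n-1) w)}"
    using card_split[of "S n r" "\<lambda>w. A (posn n w) (posn (n-1) w)"] finite_S by simp
  moreover have "{w\<in>S n r. A (posn n w) (posn (n-1) w)} = S n (\<lambda>P Q. r P Q \<and> A P Q)" unfolding S_def by auto
  moreover have "{w\<in>S n r. \<not> A (posn n w) (posn (n-1) w)} = S n (\<lambda>P Q. r P Q \<and> \<not> A P Q)" unfolding S_def by auto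
  ultimately show ?thesis by simp
qed

lemma S_cong: "(\<And>w. w \<in> Av n \<Longrightarrow> r (posn n w) (posn (n-1) w) = r' (posn n w) (posn (n-1) w)) \<Longrightarrow> S n r = S n r'"
  unfolding S_def by auto

lemma S_true: "S n (\<lambda>P Q. True) = Av n" unfolding S_def by auto

lemma posn_ne: assumes "w \<in> Av n" "2 \<le> n" shows "posn n w \<noteq> posn (n-1) w"
proof
  assume eq: "posn n w = posn (n-1) w"
  have a: "w ! posn n w = n" using posn_facts(2)[OF assms(1), of n] assms(2) by simp
  have b: "w ! posn (n-1) w = n-1" using posn_facts(2)[OF assms(1), of "n-1"] assms(2) by simp
  have "n = n - 1" using a b eq by simp
  then show False using assms(2) by simp
qed

lemma partition:
  assumes "2 \<le> n"
  shows "card (Av n) = card (S n (\<lambda>P Q. Q = Suc P)) + card (S n (\<lambda>P Q. Suc (Suc P) \<le> Q))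
     + card (S n (\<lambda>P Q. P = Suc Q)) + card (S n (\<lambda>P Q. P = Suc (Suc Q))) + card (S n (\<lambda>P Q. Suc (Suc (Suc Q)) \<le> P))"
proof -
  have "card (Av n) = card (S n (\<lambda>P Q. True \<and> P < Q)) + card (S n (\<lambda>P Q. True \<and> \<not> P < Q))"
    using S_split[of n "\<lambda>P Q. True"] S_true by simp
  moreover have "card (S n (\<lambda>P Q. True \<and> P < Q)) = card (S n (\<lambda>P Q. (True \<and> P < Q) \<and> Q = Suc P)) + card (S n (\<lambda>P Q. (True \<and> P < Q) \<and> \<not> Q = Suc P))"
    by (rule S_split)
  moreover have "S n (\<lambda>P Q. (True \<and> P < Q) \<and> Q = Suc P) = S n (\<lambda>P Q. Q = Suc P)" by (rule S_cong) auto
  moreover have "S n (\<lambda>P Q. (True \<and> P < Q) \<and> \<not> Q = Suc P) = S n (\<lambda>P Q. Suc (Suc P) \<le> Q)" by (rule S_cong) auto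
  moreover have "card (S n (\<lambda>P Q. True \<and> \<not> P < Q)) = card (S n (\<lambda>P Q. (True \<and> \<not> P < Q) \<and> P = Suc Q)) + card (S n (\<lambda>P Q. (True \<and> \<not> P < Q) \<and> \<not> P = Suc Q))"
    by (rule S_split)
  moreover have "S n (\<lambda>P Q. (True \<and> \<not> P < Q) \<and> P = Suc Q) = S n (\<lambda>P Q. P = Suc Q)" by (rule S_cong) auto
  moreover have "card (S n (\<lambda>P Q. (True \<and> \<not> P < Q) \<and> \<not> P = Suc Q)) = card (S n (\<lambda>P Q. ((True \<and> \<not> P < Q) \<and> \<not> P = Suc Q) \<and> P = Suc (Suc Q))) + card (S n (\<lambda>P Q. ((True \<and> \<not> P < Q) \<and> \<not> P = Suc Q) \<and> \<not> P = Suc (Suc Q)))"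
    by (rule S_split)
  moreover have "S n (\<lambda>P Q. ((True \<and> \<not> P < Q) \<and> \<not> P = Suc Q) \<and> P = Suc (Suc Q)) = S n (\<lambda>P Q. P = Suc (Suc Q))" by (rule S_cong) auto
  moreover have "S n (\<lambda>P Q. ((True \<and> \<not> P < Q) \<and> \<not> P = Suc Q) \<and> \<not> P = Suc (Suc Q)) = S n (\<lambda>P Q. Suc (Suc (Suc Q)) \<le> P)"
  proof (rule S_cong)
    fix w assume "w \<in> Av n"
    then have "posn n w \<noteq> posn (n-1) w" using posn_ne assms by blast
    then show "(((True \<and> \<not> posn n w < posn (n-1) w) \<and> \<not> posn n w = Suc (posn (n-1) w)) \<and> \<not> posn n w = Suc (Suc (posn (n-1) w))) = (Suc (Suc (Suc (posn (n-1) w))) \<le> posn n w)"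
      by auto
  qed
  ultimately show ?thesis by simp
qed




lemma avoid_short: "length xs < 4 \<Longrightarrow> avoid xs"
  unfolding avoid_def cont_def occ_def by auto

lemma card_T1: assumes "2 \<le> n" shows "card (S n (\<lambda>P Q. Q = Suc P)) = card (Av (n-1))"
proof -
  define f where "f w = rem w (posn n w)" for w
  define g where "g u = ins u (posn (n-1) u) n" for u
  have "bij_betw f (S n (\<lambda>P Q. Q = Suc P)) (Av (n-1))"
  proof (rule bij_betw_byWitness[where f'=g])
    show "\<forall>w\<in>S n (\<lambda>P Q. Q = Suc P). g (f w) = w"
    proof
      fix w assume w: "w \<in> S n (\<lambda>P Q. Q = Suc P)"
      define P where "P = posn n w"
      have wA: "w \<in> Av n" and Q: "posn (n-1) w = Suc P" using w unfolding S_def P_def by auto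
      have P: "P < n" "w!P = n" using posn_facts[OF wA, of n] assms P_def by auto
      have Q1: "Suc P < n" "w!(Suc P) = n-1" using posn_facts[OF wA, of "n-1"] assms Q by auto
      have lw: "length w = n" using AvD[OF wA] by simp
      have "rem w P ! P = n-1" using Q1 P lw by (simp add: nth_rem)
      moreover have "distinct (rem w P)" by (rule distinct_rem) (use AvD[OF wA] P lw in auto)
      moreover have "P < length (rem w P)" using P lw Q1 by simp
      ultimately have "posn (n-1) (rem w P) = P" using posn_unique by blast
      then show "g (f w) = w" unfolding f_def g_def P_def[symmetric]
        using ins_rem[of P w] P lw by simp
    qed
    show "\<forall>u\<in>Av (n-1). f (g u) = u"
    proof
      fix u assume u: "u \<in> Av (n-1)"
      define p where "p = posn (n-1) u"
      have p: "p < n-1" "u!p = n-1" using posn_facts[OF u, of "n-1"] assms p_def by auto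
      have lu: "length u = n-1" using AvD[OF u] by simp
      have nu: "n \<notin> set u" using AvD(2)[OF u] by auto
      have "ins u p n ! p = n" using p lu by (simp add: nth_ins)
      then have "posn n (ins u p n) = p" using posn_unique[of "ins u p n" p n] AvD(1)[OF u] nu p lu
        by (simp add: distinct_ins)
      then show "f (g u) = u" unfolding f_def g_def p_def[symmetric] using rem_ins[of p u n] p lu by simp
    qed
    show "f ` S n (\<lambda>P Q. Q = Suc P) \<subseteq> Av (n-1)"
    proof
      fix y assume "y \<in> f ` S n (\<lambda>P Q. Q = Suc P)"
      then obtain w where w: "w \<in> S n (\<lambda>P Q. Q = Suc P)" and y: "y = f w" by blast
      define P where "P = posn n w"
      have wA: "w \<in> Av n" using w unfolding S_def by auto
      have P: "P < n" "w!P = n" using posn_facts[OF wA, of n] assms P_def by auto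
      have lw: "length w = n" using AvD[OF wA] by simp
      have "set (rem w P) = {1..n} - {n}" using set_rem[of w P] AvD[OF wA] P lw by simp
      also have "\<dots> = {1..n-1}" by auto
      finally show "y \<in> Av (n-1)" unfolding y f_def P_def[symmetric]
        using distinct_rem[of w P] avoid_rem[of P w] AvD[OF wA] P lw by (intro AvI) auto
    qed
    show "g ` Av (n-1) \<subseteq> S n (\<lambda>P Q. Q = Suc P)"
    proof
      fix y assume "y \<in> g ` Av (n-1)"
      then obtain u where u: "u \<in> Av (n-1)" and y: "y = g u" by blast
      define p where "p = posn (n-1) u"
      have p: "p < n-1" "u!p = n-1" using posn_facts[OF u, of "n-1"] assms p_def by auto
      have lu: "length u = n-1" using AvD[OF u] by simp
      have nu: "n \<notin> set u" using AvD(2)[OF u] by auto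
      have d: "distinct (ins u p n)" using AvD(1)[OF u] nu p lu by (simp add: distinct_ins)
      have s: "set (ins u p n) = {1..n}" using AvD(2)[OF u] p lu assms by (auto simp: set_ins)
      have mx: "\<forall>z\<in>set u. z \<le> u!p" using AvD(2)[OF u] p by auto
      have a: "avoid (ins u p n)" using avoid_ins21[of u p n] AvD[OF u] p mx assms by simp
      have p1: "posn n (ins u p n) = p" using posn_unique[OF d] p lu by (simp add: nth_ins)
      have p2: "posn (n-1) (ins u p n) = Suc p" using posn_unique[OF d] p lu by (simp add: nth_ins)
      show "y \<in> S n (\<lambda>P Q. Q = Suc P)" unfolding S_def y g_def p_def[symmetric]
        using AvI[OF d s a] p1 p2 by simp
    qed
  qed
  then show ?thesis by (rule bij_betw_same_card)
qed

lemma del_Av: assumes "w \<in> Av n" "k < n" shows "del w k \<in> Av (n-1)"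
  using del_perm[of w n k] avoid_del[of w k] AvD[OF assms(1)] assms(2) by (intro AvI) auto

lemma dup_Av: assumes "u \<in> Av m" "i < m" shows "dup u i \<in> Av (Suc m)"
  using dup_perm[of u m i] avoid_dup[of u i] AvD[OF assms(1)] assms(2) by (intro AvI) auto

lemma val_range: assumes "w \<in> Av n" "t < n" shows "w!t \<in> {1..n}"
  using AvD[OF assms(1)] assms(2) nth_mem by blast

lemma val_inj: assumes "w \<in> Av n" "s < n" "t < n" "w!s = w!t" shows "s = t"
  using AvD[OF assms(1)] assms(2-4) nth_eq_iff_index_eq by blast

lemma card_U1: assumes "2 \<le> n" shows "card (S n (\<lambda>P Q. P = Suc Q)) = card (Av (n-1))"
proof -
  define f where "f w = del w (posn (n-1) w)" for w
  define g where "g u = dup u (posn (n-1) u)" for u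
  have "bij_betw f (S n (\<lambda>P Q. P = Suc Q)) (Av (n-1))"
  proof (rule bij_betw_byWitness[where f'=g])
    show "\<forall>w\<in>S n (\<lambda>P Q. P = Suc Q). g (f w) = w"
    proof
      fix w assume w: "w \<in> S n (\<lambda>P Q. P = Suc Q)"
      define Q where "Q = posn (n-1) w"
      have wA: "w \<in> Av n" and P: "posn n w = Suc Q" using w unfolding S_def Q_def by auto
      have Q: "Q < n" "w!Q = n-1" using posn_facts[OF wA, of "n-1"] assms Q_def by auto
      have P1: "Suc Q < n" "w!(Suc Q) = n" using posn_facts[OF wA, of n] assms P by auto
      have lw: "length w = n" using AvD[OF wA] by simp
      have "del w Q ! Q = n-1" using Q P1 lw by (simp add: nth_del relab_def)
      moreover have "distinct (del w Q)" using del_Av[OF wA Q(1)] AvD by blast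
      moreover have "Q < length (del w Q)" using P1 lw by simp
      ultimately have "posn (n-1) (del w Q) = Q" using posn_unique by blast
      then show "g (f w) = w" unfolding f_def g_def Q_def[symmetric]
        using dup_del[of w Q] AvD[OF wA] P1 Q lw assms by simp
    qed
    show "\<forall>u\<in>Av (n-1). f (g u) = u"
    proof
      fix u assume u: "u \<in> Av (n-1)"
      define p where "p = posn (n-1) u"
      have p: "p < n-1" "u!p = n-1" using posn_facts[OF u, of "n-1"] assms p_def by auto
      have lu: "length u = n-1" using AvD[OF u] by simp
      have "dup u p ! p = n-1" using p lu by (simp add: nth_dup uplab_def)
      moreover have "distinct (dup u p)" using dup_Av[OF u p(1)] AvD by blast
      moreover have "p < length (dup u p)" using p lu by simp
      ultimately have "posn (n-1) (dup u p) = p" using posn_unique by blast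
      then show "f (g u) = u" unfolding f_def g_def p_def[symmetric] using del_dup[of u p] AvD[OF u] p lu by simp
    qed
    show "f ` S n (\<lambda>P Q. P = Suc Q) \<subseteq> Av (n-1)"
    proof
      fix y assume "y \<in> f ` S n (\<lambda>P Q. P = Suc Q)"
      then obtain w where w: "w \<in> S n (\<lambda>P Q. P = Suc Q)" and y: "y = f w" by blast
      have wA: "w \<in> Av n" using w unfolding S_def by auto
      show "y \<in> Av (n-1)" unfolding y f_def using del_Av[OF wA] posn_facts[OF wA, of "n-1"] assms by simp
    qed
    show "g ` Av (n-1) \<subseteq> S n (\<lambda>P Q. P = Suc Q)"
    proof
      fix y assume "y \<in> g ` Av (n-1)"
      then obtain u where u: "u \<in> Av (n-1)" and y: "y = g u" by blast
      define p where "p = posn (n-1) u"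
      have p: "p < n-1" "u!p = n-1" using posn_facts[OF u, of "n-1"] assms p_def by auto
      have lu: "length u = n-1" using AvD[OF u] by simp
      have dA: "dup u p \<in> Av n" using dup_Av[OF u p(1)] assms by simp
      have d: "distinct (dup u p)" using dA AvD by blast
      have p1: "posn (n-1) (dup u p) = p" using posn_unique[OF d] p lu by (simp add: nth_dup uplab_def)
      have p2: "posn n (dup u p) = Suc p" using posn_unique[OF d] p lu assms by (simp add: nth_dup uplab_def)
      show "y \<in> S n (\<lambda>P Q. P = Suc Q)" unfolding S_def y g_def p_def[symmetric]
        using dA p1 p2 by simp
    qed
  qed
  then show ?thesis by (rule bij_betw_same_card)
qed




lemma card_T2: assumes "3 \<le> n"
  shows "card (S n (\<lambda>P Q. Suc (Suc P) \<le> Q)) = card (S (n-1) (\<lambda>P Q. P < Q))"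
proof -
  define f where "f w = del w (Suc (posn n w))" for w
  define g where "g u = dup u (Suc (posn (n-1) u))" for u
  have key: "\<And>w. w \<in> S n (\<lambda>P Q. Suc (Suc P) \<le> Q) \<Longrightarrow>
      f w \<in> S (n-1) (\<lambda>P Q. P < Q) \<and> posn (n-1) (f w) = posn n w \<and> g (f w) = w"
  proof -
    fix w assume w: "w \<in> S n (\<lambda>P Q. Suc (Suc P) \<le> Q)"
    define P where "P = posn n w"
    define Q where "Q = posn (n-1) w"
    have wA: "w \<in> Av n" and PQ: "Suc (Suc P) \<le> Q" using w unfolding S_def P_def Q_def by auto
    have P: "P < n" "w!P = n" using posn_facts[OF wA, of n] assms P_def by auto
    have Q: "Q < n" "w!Q = n-1" using posn_facts[OF wA, of "n-1"] assms Q_def by auto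
    have lw: "length w = n" using AvD[OF wA] by simp
    define x where "x = w!(Suc P)"
    have "x \<noteq> n" using val_inj[OF wA, of "Suc P" P] P PQ Q x_def by auto
    moreover have "x \<noteq> n-1" using val_inj[OF wA, of "Suc P" Q] P PQ Q x_def by auto
    moreover have "x \<in> {1..n}" using val_range[OF wA, of "Suc P"] PQ Q x_def by auto
    ultimately have x: "x < n-1" by auto
    define u where "u = del w (Suc P)"
    have uA: "u \<in> Av (n-1)" using del_Av[OF wA, of "Suc P"] PQ Q u_def by simp
    have lu: "length u = n-1" using AvD[OF uA] by simp
    have u1: "u!P = n-1" using x P lw PQ Q unfolding u_def by (simp add: nth_del relab_def x_def)
    have nlt: "\<not> (Q - 1 < Suc P)" using PQ by simp
    have "u!(Q-1) = relab x (w!(Suc (Q-1)))"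
      using nth_del[of "Suc P" w "Q-1"] lw PQ Q nlt unfolding u_def x_def by simp
    also have "Suc (Q-1) = Q" using PQ by simp
    finally have u2: "u!(Q-1) = n-2" using x Q by (simp add: relab_def)
    have du: "distinct u" using uA AvD by blast
    have p1: "posn (n-1) u = P" using posn_unique[OF du] u1 lu PQ Q by simp
    have p2: "posn (n-1-1) u = Q-1" using posn_unique[OF du] u2 lu PQ Q by simp
    have inS: "u \<in> S (n-1) (\<lambda>P Q. P < Q)" unfolding S_def using uA p1 p2 PQ by simp
    have r: "w!(Suc (Suc P)) = Suc (w!(Suc P))"
      using rig1[of w n P Q] AvD[OF wA] P Q PQ lw by simp
    have "g u = dup u (Suc P)" using p1 g_def by simp
    then have "g u = w" unfolding u_def using dup_del[of w "Suc P"] AvD[OF wA] r PQ Q lw by simp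
    then show "f w \<in> S (n-1) (\<lambda>P Q. P < Q) \<and> posn (n-1) (f w) = posn n w \<and> g (f w) = w"
      using inS p1 unfolding f_def u_def P_def by simp
  qed
  have key2: "\<And>u. u \<in> S (n-1) (\<lambda>P Q. P < Q) \<Longrightarrow>
      g u \<in> S n (\<lambda>P Q. Suc (Suc P) \<le> Q) \<and> f (g u) = u"
  proof -
    fix u assume u: "u \<in> S (n-1) (\<lambda>P Q. P < Q)"
    define p where "p = posn (n-1) u"
    define q where "q = posn (n-2) u"
    have uA: "u \<in> Av (n-1)" and pq: "p < q" using u unfolding S_def p_def q_def by (auto simp: numeral_2_eq_2)
    have p: "p < n-1" "u!p = n-1" using posn_facts[OF uA, of "n-1"] assms p_def by auto
    have n2: "n - 2 \<in> {1..n-1}" using assms by auto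
    have q: "q < n-1" "u!q = n-2" using posn_facts[OF uA n2] q_def by auto
    have lu: "length u = n-1" using AvD[OF uA] by simp
    define y where "y = u!(Suc p)"
    have "y \<noteq> n-1" using val_inj[OF uA, of "Suc p" p] p pq q y_def by auto
    moreover have "y \<in> {1..n-1}" using val_range[OF uA, of "Suc p"] pq q y_def by auto
    ultimately have y: "y < n-1" by auto
    define w where "w = dup u (Suc p)"
    have wA: "w \<in> Av n" using dup_Av[OF uA, of "Suc p"] pq q assms w_def by simp
    have dw: "distinct w" using wA AvD by blast
    have lw: "length w = n" using AvD[OF wA] by simp
    have w1: "w!p = n" using y p lu pq q assms unfolding w_def by (simp add: nth_dup uplab_def y_def)
    have pn: "posn n w = p" using posn_unique[OF dw] w1 lw p by simp
    have "\<exists>Q'. Suc (Suc p) \<le> Q' \<and> Q' < n \<and> w!Q' = n-1"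
    proof (cases "q = Suc p")
      case True
      then have "y = n-2" using q y_def by simp
      then show ?thesis using True q lu assms
        by (intro exI[of _ "Suc (Suc p)"]) (simp add: w_def nth_dup uplab_def y_def numeral_2_eq_2 Suc_diff_Suc)
    next
      case False
      then have "y \<noteq> n-2" using val_inj[OF uA, of "Suc p" q] pq q y_def by auto
      then have "y < n-2" using y by auto
      then show ?thesis using False pq q lu assms
        by (intro exI[of _ "Suc q"]) (simp add: w_def nth_dup uplab_def y_def numeral_2_eq_2 Suc_diff_Suc)
    qed
    then obtain Q' where Q': "Suc (Suc p) \<le> Q'" "Q' < n" "w!Q' = n-1" by blast
    have qn: "posn (n-1) w = Q'" using posn_unique[OF dw] Q' lw by simp
    have "w \<in> S n (\<lambda>P Q. Suc (Suc P) \<le> Q)" unfolding S_def using wA pn qn Q' by simp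
    moreover have "f w = del w (Suc p)" unfolding f_def using pn by simp
    then have "f w = u" unfolding w_def using del_dup[of u "Suc p"] AvD[OF uA] pq q by simp
    ultimately show "g u \<in> S n (\<lambda>P Q. Suc (Suc P) \<le> Q) \<and> f (g u) = u" unfolding g_def p_def[symmetric] w_def by simp
  qed
  have "bij_betw f (S n (\<lambda>P Q. Suc (Suc P) \<le> Q)) (S (n-1) (\<lambda>P Q. P < Q))"
    by (rule bij_betw_byWitness[where f'=g]) (use key key2 in auto)
  then show ?thesis by (rule bij_betw_same_card)
qed

lemma card_U3: assumes "3 \<le> n"
  shows "card (S n (\<lambda>P Q. Suc (Suc (Suc Q)) \<le> P)) = card (S (n-1) (\<lambda>P Q. Suc (Suc Q) \<le> P))"
proof -
  define f where "f w = del w (Suc (posn (n-1) w))" for w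
  define g where "g u = dup u (Suc (posn (n-2) u))" for u
  have key: "\<And>w. w \<in> S n (\<lambda>P Q. Suc (Suc (Suc Q)) \<le> P) \<Longrightarrow>
      f w \<in> S (n-1) (\<lambda>P Q. Suc (Suc Q) \<le> P) \<and> g (f w) = w"
  proof -
    fix w assume w: "w \<in> S n (\<lambda>P Q. Suc (Suc (Suc Q)) \<le> P)"
    define P where "P = posn n w"
    define Q where "Q = posn (n-1) w"
    have wA: "w \<in> Av n" and PQ: "Suc (Suc (Suc Q)) \<le> P" using w unfolding S_def P_def Q_def by auto
    have P: "P < n" "w!P = n" using posn_facts[OF wA, of n] assms P_def by auto
    have Q: "Q < n" "w!Q = n-1" using posn_facts[OF wA, of "n-1"] assms Q_def by auto
    have lw: "length w = n" using AvD[OF wA] by simp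
    define x where "x = w!(Suc Q)"
    have "x \<noteq> n" using val_inj[OF wA, of "Suc Q" P] P PQ Q x_def by auto
    moreover have "x \<noteq> n-1" using val_inj[OF wA, of "Suc Q" Q] P PQ Q x_def by auto
    moreover have "x \<in> {1..n}" using val_range[OF wA, of "Suc Q"] PQ P x_def by auto
    ultimately have x: "x < n-1" by auto
    define u where "u = del w (Suc Q)"
    have uA: "u \<in> Av (n-1)" using del_Av[OF wA, of "Suc Q"] PQ P u_def by simp
    have lu: "length u = n-1" using AvD[OF uA] by simp
    have u1: "u!Q = n-2" using x Q lw PQ P unfolding u_def by (simp add: nth_del relab_def x_def)
    have nlt: "\<not> (P - 1 < Suc Q)" using PQ by simp
    have "u!(P-1) = relab x (w!(Suc (P-1)))"
      using nth_del[of "Suc Q" w "P-1"] lw PQ P nlt unfolding u_def x_def by simp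
    also have "Suc (P-1) = P" using PQ by simp
    finally have u2: "u!(P-1) = n-1" using x P by (simp add: relab_def)
    have du: "distinct u" using uA AvD by blast
    have p1: "posn (n-1-1) u = Q" using posn_unique[OF du] u1 lu PQ P by (simp add: numeral_2_eq_2)
    have p2: "posn (n-1) u = P-1" using posn_unique[OF du] u2 lu PQ P by simp
    have inS: "u \<in> S (n-1) (\<lambda>P Q. Suc (Suc Q) \<le> P)" unfolding S_def using uA p1 p2 PQ by simp
    have r: "w!(Suc (Suc Q)) = Suc (w!(Suc Q))"
      using rig2[of w n P Q] AvD[OF wA] P Q PQ lw by simp
    have "g u = dup u (Suc Q)" using p1 g_def by (simp add: numeral_2_eq_2)
    then have "g u = w" unfolding u_def using dup_del[of w "Suc Q"] AvD[OF wA] r PQ P lw by simp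
    then show "f w \<in> S (n-1) (\<lambda>P Q. Suc (Suc Q) \<le> P) \<and> g (f w) = w"
      using inS unfolding f_def u_def Q_def by simp
  qed
  have key2: "\<And>u. u \<in> S (n-1) (\<lambda>P Q. Suc (Suc Q) \<le> P) \<Longrightarrow>
      g u \<in> S n (\<lambda>P Q. Suc (Suc (Suc Q)) \<le> P) \<and> f (g u) = u"
  proof -
    fix u assume u: "u \<in> S (n-1) (\<lambda>P Q. Suc (Suc Q) \<le> P)"
    define p where "p = posn (n-1) u"
    define q where "q = posn (n-2) u"
    have uA: "u \<in> Av (n-1)" and pq: "Suc (Suc q) \<le> p" using u unfolding S_def p_def q_def by (auto simp: numeral_2_eq_2)
    have p: "p < n-1" "u!p = n-1" using posn_facts[OF uA, of "n-1"] assms p_def by auto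
    have n2: "n - 2 \<in> {1..n-1}" using assms by auto
    have q: "q < n-1" "u!q = n-2" using posn_facts[OF uA n2] q_def by auto
    have lu: "length u = n-1" using AvD[OF uA] by simp
    define y where "y = u!(Suc q)"
    have "y \<noteq> n-1" using val_inj[OF uA, of "Suc q" p] p pq q y_def by auto
    moreover have "y \<noteq> n-2" using val_inj[OF uA, of "Suc q" q] p pq q y_def by auto
    moreover have "y \<in> {1..n-1}" using val_range[OF uA, of "Suc q"] pq p y_def by auto
    ultimately have y: "y < n-2" by auto
    define w where "w = dup u (Suc q)"
    have wA: "w \<in> Av n" using dup_Av[OF uA, of "Suc q"] pq p assms w_def by simp
    have dw: "distinct w" using wA AvD by blast
    have lw: "length w = n" using AvD[OF wA] by simp
    have w1: "w!q = n-1" using y q lu pq p assms unfolding w_def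
      by (simp add: nth_dup uplab_def y_def numeral_2_eq_2 Suc_diff_Suc)
    have w2: "w!(Suc p) = n" using y p lu pq q assms unfolding w_def
      by (simp add: nth_dup uplab_def y_def)
    have qn: "posn (n-1) w = q" using posn_unique[OF dw] w1 lw q by simp
    have pn: "posn n w = Suc p" using posn_unique[OF dw] w2 lw p by simp
    have "w \<in> S n (\<lambda>P Q. Suc (Suc (Suc Q)) \<le> P)" unfolding S_def using wA pn qn pq by simp
    moreover have "f w = del w (Suc q)" unfolding f_def using qn by simp
    then have "f w = u" unfolding w_def using del_dup[of u "Suc q"] AvD[OF uA] pq p by simp
    ultimately show "g u \<in> S n (\<lambda>P Q. Suc (Suc (Suc Q)) \<le> P) \<and> f (g u) = u"
      unfolding g_def q_def[symmetric] w_def by simp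
  qed
  have "bij_betw f (S n (\<lambda>P Q. Suc (Suc (Suc Q)) \<le> P)) (S (n-1) (\<lambda>P Q. Suc (Suc Q) \<le> P))"
    by (rule bij_betw_byWitness[where f'=g]) (use key key2 in auto)
  then show ?thesis by (rule bij_betw_same_card)
qed




lemma map_ins: "i \<le> length v \<Longrightarrow> map h (ins v i N) = ins (map h v) i (h N)"
  by (simp add: ins_def take_map drop_map)

lemma ins_max_change:
  assumes "\<forall>z\<in>set v. z < M" "\<forall>z\<in>set v. z < N" "i \<le> length v" "avoid (ins v i N)"
  shows "avoid (ins v i M)"
proof -
  define h where "h z = (if z = N then M else z)" for z
  have "map h v = v" using assms(2) unfolding h_def by (induction v) auto
  moreover have "map h (ins v i N) = ins (map h v) i (h N)" by (rule map_ins[OF assms(3)])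
  moreover have "h N = M" by (simp add: h_def)
  ultimately have eq: "map h (ins v i N) = ins v i M" by simp
  have "strict_mono_on (set (ins v i N)) h"
    unfolding strict_mono_on_def h_def using assms(1,2,3) by (auto simp: set_ins)
  from strict_mono_on_avoid'[OF this assms(4)] show ?thesis using eq by simp
qed

lemma rem_wrap1: "i < length v \<Longrightarrow> rem (wrap v i M N) (Suc (Suc i)) = ins v i M"
  by (simp add: wrap_def rem_ins)

lemma rem_wrap2: assumes "i < length v" shows "rem (wrap v i M N) i = ins v (Suc i) N"
proof (rule nth_equalityI)
  show "length (rem (wrap v i M N) i) = length (ins v (Suc i) N)" using assms by (simp add: length_wrap)
  fix t assume "t < length (rem (wrap v i M N) i)"
  then have t: "t < Suc (length v)" using assms by (simp add: length_wrap)
  show "rem (wrap v i M N) i ! t = ins v (Suc i) N ! t"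
    using t assms by (cases "t < i"; cases "t = i"; cases "t = Suc i"; auto simp: nth_rem length_wrap nth_wrap nth_ins)
qed

definition Qs :: "nat \<Rightarrow> (nat list \<times> nat) set" where
  "Qs m = {(v,i). v \<in> Av m \<and> i \<le> m \<and> avoid (ins v i (Suc m))}"

lemma finite_Qs: "finite (Qs m)"
proof -
  have "Qs m \<subseteq> Av m \<times> {0..m}" unfolding Qs_def by auto
  then show ?thesis using finite_Av by (meson finite_SigmaI finite_atLeastAtMost finite_subset)
qed

lemma card_Qs: "card (Qs m) = card (Av (Suc m))"
proof -
  define f where "f p = ins (fst p) (snd p) (Suc m)" for p :: "nat list \<times> nat"
  define g where "g w = (rem w (posn (Suc m) w), posn (Suc m) w)" for w
  have "bij_betw f (Qs m) (Av (Suc m))"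
  proof (rule bij_betw_byWitness[where f'=g])
    show "\<forall>p\<in>Qs m. g (f p) = p"
    proof
      fix p assume "p \<in> Qs m"
      then obtain v i where p: "p = (v,i)" and vA: "v \<in> Av m" and i: "i \<le> m" unfolding Qs_def by auto
      have lv: "length v = m" using AvD[OF vA] by simp
      have nv: "Suc m \<notin> set v" using AvD(2)[OF vA] by auto
      have d: "distinct (ins v i (Suc m))" using AvD(1)[OF vA] nv i lv by (simp add: distinct_ins)
      have "posn (Suc m) (ins v i (Suc m)) = i" using posn_unique[OF d] i lv by (simp add: nth_ins)
      then show "g (f p) = p" unfolding p f_def g_def using rem_ins[of i v] i lv by simp
    qed
    show "\<forall>w\<in>Av (Suc m). f (g w) = w"
    proof
      fix w assume wA: "w \<in> Av (Suc m)"
      have "posn (Suc m) w < Suc m" "w ! posn (Suc m) w = Suc m" using posn_facts[OF wA, of "Suc m"] by auto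
      then show "f (g w) = w" unfolding f_def g_def using ins_rem[of "posn (Suc m) w" w] AvD[OF wA] by simp
    qed
    show "f ` Qs m \<subseteq> Av (Suc m)"
    proof
      fix y assume "y \<in> f ` Qs m"
      then obtain v i where "(v,i) \<in> Qs m" and y: "y = ins v i (Suc m)" unfolding f_def by auto
      then have vA: "v \<in> Av m" and i: "i \<le> m" and a: "avoid (ins v i (Suc m))" unfolding Qs_def by auto
      have lv: "length v = m" using AvD[OF vA] by simp
      have nv: "Suc m \<notin> set v" using AvD(2)[OF vA] by auto
      have d: "distinct (ins v i (Suc m))" using AvD(1)[OF vA] nv i lv by (simp add: distinct_ins)
      have s: "set (ins v i (Suc m)) = {1..Suc m}" using AvD(2)[OF vA] i lv by (auto simp: set_ins)
      show "y \<in> Av (Suc m)" unfolding y using AvI[OF d s a] .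
    qed
    show "g ` Av (Suc m) \<subseteq> Qs m"
    proof
      fix y assume "y \<in> g ` Av (Suc m)"
      then obtain w where wA: "w \<in> Av (Suc m)" and y: "y = g w" by blast
      define i where "i = posn (Suc m) w"
      have i: "i < Suc m" "w!i = Suc m" using posn_facts[OF wA, of "Suc m"] i_def by auto
      have lw: "length w = Suc m" using AvD[OF wA] by simp
      have "set (rem w i) = {1..Suc m} - {Suc m}" using set_rem[of w i] AvD[OF wA] i lw by simp
      also have "\<dots> = {1..m}" by auto
      finally have vA: "rem w i \<in> Av m"
        using distinct_rem[of w i] avoid_rem[of i w] AvD[OF wA] i lw by (intro AvI) auto
      have "ins (rem w i) i (Suc m) = w" using ins_rem[of i w] i lw by simp
      then show "y \<in> Qs m" unfolding y g_def i_def[symmetric] Qs_def using vA i AvD[OF wA] by simp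
    qed
  qed
  then show ?thesis by (rule bij_betw_same_card)
qed

definition Q1 :: "nat \<Rightarrow> (nat list \<times> nat) set" where
  "Q1 m = {p \<in> Qs m. (fst p, Suc (snd p)) \<in> Qs m}"
definition Q2 :: "nat \<Rightarrow> (nat list \<times> nat) set" where
  "Q2 m = {p \<in> Qs m. (fst p, Suc (snd p)) \<notin> Qs m}"

lemma card_Qs_split: "card (Qs m) = card (Q1 m) + card (Q2 m)"
  unfolding Q1_def Q2_def by (rule card_split[OF finite_Qs])

lemma card_Q2: "card (Q2 m) = card (Av m)"
proof -
  have inj: "inj_on fst (Q2 m)"
  proof (rule inj_onI)
    fix p p' assume p: "p \<in> Q2 m" and p': "p' \<in> Q2 m" and eq: "fst p = fst p'"
    obtain v i where pv: "p = (v,i)" by (cases p)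
    obtain j where pj: "p' = (v,j)" using eq pv by (cases p') auto
    have A: "\<And>i j. (v,i) \<in> Q2 m \<Longrightarrow> (v,j) \<in> Q2 m \<Longrightarrow> i < j \<Longrightarrow> False"
    proof -
      fix i j assume a: "(v,i) \<in> Q2 m" "(v,j) \<in> Q2 m" "i < j"
      have vA: "v \<in> Av m" and ai: "avoid (ins v i (Suc m))" and nsi: "(v, Suc i) \<notin> Qs m"
        and j: "j \<le> m" and aj: "avoid (ins v j (Suc m))"
        using a unfolding Q2_def Qs_def by auto
      show False
      proof (cases "Suc i = j")
        case True then show False using a(2) nsi unfolding Q2_def by auto
      next
        case False
        then have "Suc i < j" using a(3) by simp
        then have "avoid (ins v (Suc i) (Suc m))"
          using avoid_convex[of v "Suc m" i "Suc i" j] AvD[OF vA] ai aj j by auto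
        then have "(v, Suc i) \<in> Qs m" unfolding Qs_def using vA \<open>Suc i < j\<close> j by auto
        then show False using nsi by simp
      qed
    qed
    have "i = j" using A[of i j] A[of j i] p p' pv pj by (metis linorder_neqE_nat)
    then show "p = p'" using pv pj by simp
  qed
  have img: "fst ` Q2 m = Av m"
  proof
    show "fst ` Q2 m \<subseteq> Av m" unfolding Q2_def Qs_def by auto
    show "Av m \<subseteq> fst ` Q2 m"
    proof
      fix v assume vA: "v \<in> Av m"
      define G where "G = {i. (v,i) \<in> Qs m}"
      have fG: "finite G" unfolding G_def Qs_def by (rule finite_subset[of _ "{0..m}"]) auto
      have lv: "length v = m" using AvD[OF vA] by simp
      have "G \<noteq> {}"
      proof (cases m)
        case 0
        then have "v = []" using lv by simp
        then have "(v, 0) \<in> Qs m" unfolding Qs_def using vA 0 avoid_short by (simp add: ins_def)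
        then show ?thesis unfolding G_def by auto
      next
        case (Suc m')
        define p where "p = posn m v"
        have p: "p < m" "v!p = m" using posn_facts[OF vA, of m] Suc p_def by auto
        have "map (uplab (v!p)) v = v" using AvD(2)[OF vA] p unfolding uplab_def
          by (intro map_idI) auto
        then have "dup v p = ins v (Suc p) (Suc m)" unfolding dup_def using p by simp
        then have "avoid (ins v (Suc p) (Suc m))" using avoid_dup[of v p] AvD[OF vA] p lv by simp
        then have "(v, Suc p) \<in> Qs m" unfolding Qs_def using vA p by simp
        then show ?thesis unfolding G_def by auto
      qed
      define i where "i = Max G"
      have iG: "i \<in> G" using Max_in[OF fG \<open>G \<noteq> {}\<close>] i_def by simp
      have "Suc i \<notin> G" using Max_ge[OF fG] i_def by fastforce
      then have "(v,i) \<in> Q2 m" using iG unfolding G_def Q2_def by simp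
      then show "v \<in> fst ` Q2 m" by force
    qed
  qed
  show ?thesis using card_image[OF inj] img by simp
qed

lemma card_Q1: "card (Q1 m) = card (S (Suc (Suc m)) (\<lambda>P Q. P = Suc (Suc Q)))"
proof -
  define M where "M = Suc m"
  define N where "N = Suc (Suc m)"
  define f where "f p = wrap (fst p) (snd p) M N" for p :: "nat list \<times> nat"
  define g where "g w = (rem (rem w (Suc (Suc (posn M w)))) (posn M w), posn M w)" for w
  have key: "\<And>p. p \<in> Q1 m \<Longrightarrow> f p \<in> S N (\<lambda>P Q. P = Suc (Suc Q)) \<and> g (f p) = p"
  proof -
    fix p assume p: "p \<in> Q1 m"
    obtain v i where pv: "p = (v,i)" by (cases p)
    have vA: "v \<in> Av m" and i: "Suc i \<le> m" and a1: "avoid (ins v i M)" and a2: "avoid (ins v (Suc i) M)"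
      using p unfolding pv Q1_def Qs_def M_def by auto
    have lv: "length v = m" using AvD[OF vA] by simp
    have il: "i < length v" using i lv by simp
    have vM: "\<forall>z\<in>set v. z < M" using AvD(2)[OF vA] M_def by auto
    have MN: "M < N" unfolding M_def N_def by simp
    define w where "w = wrap v i M N"
    have aw: "avoid w" unfolding w_def using avoid_wrap[OF AvD(1)[OF vA] il vM MN a1 a2] .
    have dw: "distinct w" unfolding w_def wrap_def using AvD(1)[OF vA] vM MN il
      by (auto simp: distinct_ins set_ins)
    have sw: "set w = {1..N}" unfolding w_def wrap_def using AvD(2)[OF vA] il M_def N_def
      by (auto simp: set_ins)
    have wA: "w \<in> Av N" using AvI[OF dw sw aw] .
    have lw: "length w = N" using AvD[OF wA] by simp
    have pM: "posn M w = i" using posn_unique[OF dw, of i M] lw il N_def lv unfolding w_def by (simp add: nth_wrap)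
    have pN: "posn N w = Suc (Suc i)" using posn_unique[OF dw, of "Suc (Suc i)" N] lw il N_def lv
      unfolding w_def by (simp add: nth_wrap)
    have NM: "N - 1 = M" unfolding M_def N_def by simp
    have inS: "w \<in> S N (\<lambda>P Q. P = Suc (Suc Q))" unfolding S_def using wA pM pN NM by simp
    have "g w = (rem (rem w (Suc (Suc i))) i, i)" unfolding g_def pM ..
    also have "\<dots> = (v, i)" unfolding w_def using rem_wrap1[OF il] rem_ins[of i v M] il by simp
    finally have "g w = (v, i)" .
    then show "f p \<in> S N (\<lambda>P Q. P = Suc (Suc Q)) \<and> g (f p) = p" using inS unfolding f_def pv w_def by simp
  qed
  have key2: "\<And>w. w \<in> S N (\<lambda>P Q. P = Suc (Suc Q)) \<Longrightarrow> g w \<in> Q1 m \<and> f (g w) = w"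
  proof -
    fix w assume w: "w \<in> S N (\<lambda>P Q. P = Suc (Suc Q))"
    define Q where "Q = posn M w"
    have NM: "N - 1 = M" unfolding M_def N_def by simp
    have wA: "w \<in> Av N" and PQ: "posn N w = Suc (Suc Q)" using w NM unfolding S_def Q_def by auto
    have Q: "Q < N" "w!Q = M" using posn_facts[OF wA, of M] Q_def M_def N_def by auto
    have P: "Suc (Suc Q) < N" "w!(Suc (Suc Q)) = N" using posn_facts[OF wA, of N] PQ N_def by auto
    have lw: "length w = N" using AvD[OF wA] by simp
    define w1 where "w1 = rem w (Suc (Suc Q))"
    have lw1: "length w1 = Suc m" using lw P unfolding w1_def N_def by simp
    have w1Q: "w1!Q = M" using Q P lw unfolding w1_def by (simp add: nth_rem)
    define v where "v = rem w1 Q"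
    have dw1: "distinct w1" unfolding w1_def by (rule distinct_rem) (use AvD[OF wA] P lw in auto)
    have "set w1 = {1..N} - {N}" using set_rem[of w "Suc (Suc Q)"] AvD(1,2)[OF wA] P lw unfolding w1_def by simp
    also have "{1..N} - {N} = {1..M}" by (auto simp: M_def N_def)
    finally have sw1: "set w1 = {1..M}" .
    have aw1: "avoid w1" unfolding w1_def using avoid_rem[of "Suc (Suc Q)" w] AvD[OF wA] P lw by simp
    have w1A: "w1 \<in> Av M" using AvI[OF dw1 sw1 aw1] .
    have Ql1: "Q < length w1" using lw1 P N_def by simp
    have "set v = {1..M} - {M}" unfolding v_def using set_rem[OF dw1 Ql1] sw1 w1Q by simp
    also have "{1..M} - {M} = {1..m}" by (auto simp: M_def)
    finally have sv: "set v = {1..m}" .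
    have vA: "v \<in> Av m"
      by (rule AvI) (use distinct_rem[OF dw1 Ql1] sv avoid_rem[OF Ql1 aw1] v_def in auto)
    have lv: "length v = m" using AvD[OF vA] by simp
    have e1: "ins v Q M = w1" unfolding v_def using ins_rem[OF Ql1] w1Q by simp
    have e2: "wrap v Q M N = w" unfolding wrap_def e1 w1_def using ins_rem[of "Suc (Suc Q)" w] P lw by simp
    have Ql: "Q < length v" using lv P N_def by simp
    have a2: "avoid (ins v (Suc Q) N)" using rem_wrap2[OF Ql, of M N] e2 avoid_rem[of Q w] AvD[OF wA] Q lw by simp
    have vM: "\<forall>z\<in>set v. z < M" "\<forall>z\<in>set v. z < N" using sv M_def N_def by auto
    have a2': "avoid (ins v (Suc Q) M)" using ins_max_change[OF vM _ a2] Ql by simp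
    have "(v, Q) \<in> Qs m" "(v, Suc Q) \<in> Qs m" unfolding Qs_def using vA e1 aw1 a2' Ql lv M_def by auto
    then have "(v, Q) \<in> Q1 m" unfolding Q1_def by simp
    moreover have "g w = (v, Q)" unfolding g_def Q_def[symmetric] w1_def[symmetric] v_def ..
    ultimately show "g w \<in> Q1 m \<and> f (g w) = w" unfolding f_def using e2 by simp
  qed
  have "bij_betw f (Q1 m) (S N (\<lambda>P Q. P = Suc (Suc Q)))"
    by (rule bij_betw_byWitness[where f'=g]) (use key key2 in auto)
  then show ?thesis using bij_betw_same_card N_def by blast
qed

lemma card_U2: "card (Av (Suc m)) = card (S (Suc (Suc m)) (\<lambda>P Q. P = Suc (Suc Q))) + card (Av m)"
  using card_Qs[of m] card_Qs_split[of m] card_Q1[of m] card_Q2[of m] by simp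




definition iso4 :: "nat \<Rightarrow> nat \<Rightarrow> nat \<Rightarrow> nat \<Rightarrow> nat \<Rightarrow> nat \<Rightarrow> nat \<Rightarrow> nat \<Rightarrow> bool" where
  "iso4 x1 x2 x3 x4 y1 y2 y3 y4 \<longleftrightarrow>
     (x1<x2 \<longleftrightarrow> y1<y2) \<and> (x1<x3 \<longleftrightarrow> y1<y3) \<and> (x1<x4 \<longleftrightarrow> y1<y4) \<and>
     (x2<x1 \<longleftrightarrow> y2<y1) \<and> (x2<x3 \<longleftrightarrow> y2<y3) \<and> (x2<x4 \<longleftrightarrow> y2<y4) \<and>
     (x3<x1 \<longleftrightarrow> y3<y1) \<and> (x3<x2 \<longleftrightarrow> y3<y2) \<and> (x3<x4 \<longleftrightarrow> y3<y4) \<and>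
     (x4<x1 \<longleftrightarrow> y4<y1) \<and> (x4<x2 \<longleftrightarrow> y4<y2) \<and> (x4<x3 \<longleftrightarrow> y4<y3)"

lemma four: "{1..4::nat} = {1,2,3,4}" by auto

lemma cp_iff:
  "contains_pattern n w 4 p \<longleftrightarrow> (\<exists>i1 i2 i3 i4. 1 \<le> i1 \<and> i1<i2 \<and> i2<i3 \<and> i3<i4 \<and> i4 \<le> n \<and>
      iso4 (w i1) (w i2) (w i3) (w i4) (p 1) (p 2) (p 3) (p 4))"
proof
  assume "contains_pattern n w 4 p"
  then obtain idx where sm: "strict_mono_on {1..4} idx" and im: "idx ` {1..4} \<subseteq> {1..n}"
    and o: "\<forall>a\<in>{1..4}. \<forall>b\<in>{1..4}. (w (idx a) < w (idx b)) = (p a < p b)"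
    unfolding contains_pattern_def by blast
  have "idx 1 < idx 2" "idx 2 < idx 3" "idx 3 < idx 4" using sm unfolding strict_mono_on_def four by auto
  moreover have "1 \<le> idx 1" "idx 4 \<le> n" using im unfolding four by auto
  moreover have "iso4 (w (idx 1)) (w (idx 2)) (w (idx 3)) (w (idx 4)) (p 1) (p 2) (p 3) (p 4)"
    using o unfolding four iso4_def by simp
  ultimately show "\<exists>i1 i2 i3 i4. 1 \<le> i1 \<and> i1<i2 \<and> i2<i3 \<and> i3<i4 \<and> i4 \<le> n \<and>
      iso4 (w i1) (w i2) (w i3) (w i4) (p 1) (p 2) (p 3) (p 4)" by blast
next
  assume "\<exists>i1 i2 i3 i4. 1 \<le> i1 \<and> i1<i2 \<and> i2<i3 \<and> i3<i4 \<and> i4 \<le> n \<and>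
      iso4 (w i1) (w i2) (w i3) (w i4) (p 1) (p 2) (p 3) (p 4)"
  then obtain i1 i2 i3 i4 where i: "1 \<le> i1" "i1<i2" "i2<i3" "i3<i4" "i4 \<le> n"
    and isw: "iso4 (w i1) (w i2) (w i3) (w i4) (p 1) (p 2) (p 3) (p 4)" by blast
  define idx where "idx k = (if k = 1 then i1 else if k = 2 then i2 else if k = 3 then i3 else i4)" for k :: nat
  have "strict_mono_on {1..4} idx" unfolding strict_mono_on_def four idx_def using i by auto
  moreover have "idx ` {1..4} \<subseteq> {1..n}" unfolding four idx_def using i by auto
  moreover have "\<forall>a\<in>{1..4}. \<forall>b\<in>{1..4}. (w (idx a) < w (idx b)) = (p a < p b)"
    unfolding four idx_def using isw unfolding iso4_def by simp
  ultimately show "contains_pattern n w 4 p" unfolding contains_pattern_def by blast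
qed

lemma iso_R1: "iso4 A B C D (pat2413 1) (pat2413 2) (pat2413 3) (pat2413 4) \<longleftrightarrow> R1 A B C D"
  unfolding iso4_def R1_def pat2413_def perm_of_list_def by auto
lemma iso_R2: "iso4 A B C D (pat4132 1) (pat4132 2) (pat4132 3) (pat4132 4) \<longleftrightarrow> R2 A B C D"
  unfolding iso4_def R2_def pat4132_def perm_of_list_def by auto
lemma iso_R3: "iso4 A B C D (pat4213 1) (pat4213 2) (pat4213 3) (pat4213 4) \<longleftrightarrow> R3 A B C D"
  unfolding iso4_def R3_def pat4213_def perm_of_list_def by auto
lemma iso_R4: "iso4 A B C D (pat3214 1) (pat3214 2) (pat3214 3) (pat3214 4) \<longleftrightarrow> R4 A B C D"
  unfolding iso4_def R4_def pat3214_def perm_of_list_def by auto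

lemma nth_mapw: "t < n \<Longrightarrow> map w [1..<Suc n] ! t = w (Suc t)"
  by (simp del: upt_Suc add: nth_map nth_upt)

lemma idx_cont:
  "(\<exists>i1 i2 i3 i4. 1 \<le> i1 \<and> i1<i2 \<and> i2<i3 \<and> i3<i4 \<and> i4 \<le> n \<and> R (w i1) (w i2) (w i3) (w i4))
    \<longleftrightarrow> cont R (map w [1..<Suc n])"
proof
  assume "\<exists>i1 i2 i3 i4. 1 \<le> i1 \<and> i1<i2 \<and> i2<i3 \<and> i3<i4 \<and> i4 \<le> n \<and> R (w i1) (w i2) (w i3) (w i4)"
  then obtain i1 i2 i3 i4 where i: "1 \<le> i1" "i1<i2" "i2<i3" "i3<i4" "i4 \<le> n" and r: "R (w i1) (w i2) (w i3) (w i4)"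
    by blast
  have v: "map w [1..<Suc n] ! (i1 - 1) = w i1" "map w [1..<Suc n] ! (i2 - 1) = w i2"
    "map w [1..<Suc n] ! (i3 - 1) = w i3" "map w [1..<Suc n] ! (i4 - 1) = w i4"
    using nth_mapw[of "i1 - 1" n w] nth_mapw[of "i2 - 1" n w] nth_mapw[of "i3 - 1" n w] nth_mapw[of "i4 - 1" n w] i
    by auto
  have "occ R (map w [1..<Suc n]) (i1 - 1) (i2 - 1) (i3 - 1) (i4 - 1)"
  proof -
    have "i1 - 1 < i2 - 1" "i2 - 1 < i3 - 1" "i3 - 1 < i4 - 1" "i4 - 1 < n" using i by arith+
    moreover have "length (map w [1..<Suc n]) = n" by (simp del: upt_Suc)
    ultimately show ?thesis unfolding occ_def using r v by simp
  qed
  then show "cont R (map w [1..<Suc n])" unfolding cont_def by blast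
next
  assume "cont R (map w [1..<Suc n])"
  then obtain a b c d where oc: "occ R (map w [1..<Suc n]) a b c d" unfolding cont_def by blast
  have ln: "length (map w [1..<Suc n]) = n" by (simp del: upt_Suc)
  have o0: "a<b" "b<c" "c<d" "d<n" using oc ln unfolding occ_def by auto
  have "R (map w [1..<Suc n] ! a) (map w [1..<Suc n] ! b) (map w [1..<Suc n] ! c) (map w [1..<Suc n] ! d)"
    using oc unfolding occ_def by blast
  then have o: "a<b" "b<c" "c<d" "d<n" "R (w (Suc a)) (w (Suc b)) (w (Suc c)) (w (Suc d))"
    using o0 nth_mapw[of a n w] nth_mapw[of b n w] nth_mapw[of c n w] nth_mapw[of d n w] by auto
  then show "\<exists>i1 i2 i3 i4. 1 \<le> i1 \<and> i1<i2 \<and> i2<i3 \<and> i3<i4 \<and> i4 \<le> n \<and> R (w i1) (w i2) (w i3) (w i4)"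
    by (intro exI[of _ "Suc a"] exI[of _ "Suc b"] exI[of _ "Suc c"] exI[of _ "Suc d"]) auto
qed

lemma avoids_iff:
  "(avoids n w 4 pat2413 \<and> avoids n w 4 pat4132 \<and> avoids n w 4 pat4213 \<and> avoids n w 4 pat3214)
    \<longleftrightarrow> avoid (map w [1..<Suc n])"
  unfolding avoids_def cp_iff iso_R1 iso_R2 iso_R3 iso_R4 idx_cont avoid_def by blast

lemma e_eq: "e n = card (Av n)"
proof -
  define A where "A = {w. w permutes {1..n} \<and> avoids n w 4 pat2413 \<and> avoids n w 4 pat4132
                 \<and> avoids n w 4 pat4213 \<and> avoids n w 4 pat3214}"
  define f where "f w = map w [1..<Suc n]" for w :: "nat \<Rightarrow> nat"
  have inj: "inj_on f A"
  proof (rule inj_onI)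
    fix w w' assume w: "w \<in> A" and w': "w' \<in> A" and eq: "f w = f w'"
    have pw: "w permutes {1..n}" "w' permutes {1..n}" using w w' unfolding A_def by auto
    show "w = w'"
    proof
      fix x show "w x = w' x"
      proof (cases "x \<in> {1..n}")
        case True
        then have "x - 1 < n" "Suc (x - 1) = x" by auto
        then show ?thesis using eq nth_mapw[of "x-1" n w] nth_mapw[of "x-1" n w'] unfolding f_def by metis
      next
        case False
        then show ?thesis using pw permutes_not_in by metis
      qed
    qed
  qed
  have img: "f ` A = Av n"
  proof
    show "f ` A \<subseteq> Av n"
    proof
      fix y assume "y \<in> f ` A"
      then obtain w where w: "w \<in> A" and y: "y = f w" by blast
      have pw: "w permutes {1..n}" using w unfolding A_def by auto
      have "set [1..<Suc n] = {1..n}" by auto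
      then have s: "set y = {1..n}" unfolding y f_def using permutes_image[OF pw] by simp
      have "inj_on w {1..n}" using pw by (meson permutes_inj_on)
      then have d: "distinct y" unfolding y f_def distinct_map using \<open>set [1..<Suc n] = {1..n}\<close> by simp
      have a: "avoid y" unfolding y f_def using w avoids_iff unfolding A_def by blast
      show "y \<in> Av n" using AvI[OF d s a] .
    qed
    show "Av n \<subseteq> f ` A"
    proof
      fix xs assume xA: "xs \<in> Av n"
      have lx: "length xs = n" using AvD[OF xA] by simp
      define w where "w i = (if i \<in> {1..n} then xs ! (i - 1) else i)" for i
      have injw: "inj_on w {1..n}"
      proof (rule inj_onI)
        fix i j assume "i \<in> {1..n}" "j \<in> {1..n}" "w i = w j"
        then have "xs!(i-1) = xs!(j-1)" "i - 1 < n" "j - 1 < n" unfolding w_def by auto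
        then have "i - 1 = j - 1" using AvD(1)[OF xA] lx nth_eq_iff_index_eq by metis
        then show "i = j" using \<open>i \<in> {1..n}\<close> \<open>j \<in> {1..n}\<close> by auto
      qed
      have imw: "w ` {1..n} = {1..n}"
      proof -
        have "w ` {1..n} = (\<lambda>i. xs ! (i-1)) ` {1..n}" unfolding w_def by auto
        also have "\<dots> = (\<lambda>t. xs ! t) ` {0..<n}"
        proof
          show "(\<lambda>i. xs ! (i-1)) ` {1..n} \<subseteq> (\<lambda>t. xs ! t) ` {0..<n}" by force
          show "(\<lambda>t. xs ! t) ` {0..<n} \<subseteq> (\<lambda>i. xs ! (i-1)) ` {1..n}"
          proof
            fix y assume "y \<in> (\<lambda>t. xs ! t) ` {0..<n}"
            then obtain t where "t < n" "y = xs ! t" by auto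
            then show "y \<in> (\<lambda>i. xs ! (i-1)) ` {1..n}" by (intro image_eqI[of _ _ "Suc t"]) auto
          qed
        qed
        also have "\<dots> = set xs" using lx by (auto simp: set_conv_nth)
        finally show ?thesis using AvD(2)[OF xA] by simp
      qed
      have pw: "w permutes {1..n}"
        by (rule bij_imp_permutes) (use injw imw in \<open>auto simp: bij_betw_def w_def\<close>)
      have fw: "f w = xs"
      proof (rule nth_equalityI)
        show "length (f w) = length xs" using lx unfolding f_def by (simp del: upt_Suc)
        fix t assume "t < length (f w)"
        then have t: "t < n" unfolding f_def by (simp del: upt_Suc)
        then show "f w ! t = xs ! t" unfolding f_def using nth_mapw[OF t, of w] by (simp add: w_def)
      qed
      have "w \<in> A" unfolding A_def using pw avoids_iff[of n w] fw AvD(3)[OF xA] unfolding f_def by simp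
      then show "xs \<in> f ` A" using fw by blast
    qed
  qed
  have "e n = card A" unfolding e_def A_def ..
  also have "\<dots> = card (f ` A)" using card_image[OF inj] by simp
  finally show ?thesis using img by simp
qed




lemma Av0: "Av 0 = {[]}"
  unfolding Av_def using avoid_short[of "[]"] by auto

lemma Av1: "Av 1 = {[1]}"
proof
  show "Av 1 \<subseteq> {[1]}"
  proof
    fix w assume w: "w \<in> Av 1"
    have "length w = 1" using AvD[OF w] by simp
    then obtain x where "w = [x]" by (metis One_nat_def length_0_conv length_Suc_conv)
    then show "w \<in> {[1]}" using AvD(2)[OF w] by auto
  qed
  show "{[1]} \<subseteq> Av 1" unfolding Av_def using avoid_short[of "[1]"] by auto
qed

lemma S_empty_T2: "S 2 (\<lambda>P Q. Suc (Suc P) \<le> Q) = {}"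
proof -
  have "\<And>w. w \<in> Av 2 \<Longrightarrow> posn 1 w < 2" using posn_facts[of _ 2 1] by auto
  then show ?thesis unfolding S_def by fastforce
qed

lemma S_empty_U3: "S 2 (\<lambda>P Q. Suc (Suc (Suc Q)) \<le> P) = {}"
proof -
  have "\<And>w. w \<in> Av 2 \<Longrightarrow> posn 2 w < 2" using posn_facts[of _ 2 2] by auto
  then show ?thesis unfolding S_def by fastforce
qed

lemma T2_rec: assumes "3 \<le> n"
  shows "card (S n (\<lambda>P Q. Suc (Suc P) \<le> Q)) = card (S (n-1) (\<lambda>P Q. Q = Suc P)) + card (S (n-1) (\<lambda>P Q. Suc (Suc P) \<le> Q))"
proof -
  have "card (S (n-1) (\<lambda>P Q. P < Q)) = card (S (n-1) (\<lambda>P Q. P < Q \<and> Q = Suc P)) + card (S (n-1) (\<lambda>P Q. P < Q \<and> \<not> Q = Suc P))"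
    by (rule S_split)
  moreover have "S (n-1) (\<lambda>P Q. P < Q \<and> Q = Suc P) = S (n-1) (\<lambda>P Q. Q = Suc P)" by (rule S_cong) auto
  moreover have "S (n-1) (\<lambda>P Q. P < Q \<and> \<not> Q = Suc P) = S (n-1) (\<lambda>P Q. Suc (Suc P) \<le> Q)" by (rule S_cong) auto
  ultimately show ?thesis using card_T2[OF assms] by simp
qed

lemma U3_rec: assumes "3 \<le> n"
  shows "card (S n (\<lambda>P Q. Suc (Suc (Suc Q)) \<le> P)) = card (S (n-1) (\<lambda>P Q. P = Suc (Suc Q))) + card (S (n-1) (\<lambda>P Q. Suc (Suc (Suc Q)) \<le> P))"
proof -
  have "card (S (n-1) (\<lambda>P Q. Suc (Suc Q) \<le> P)) = card (S (n-1) (\<lambda>P Q. Suc (Suc Q) \<le> P \<and> P = Suc (Suc Q))) + card (S (n-1) (\<lambda>P Q. Suc (Suc Q) \<le> P \<and> \<not> P = Suc (Suc Q)))"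
    by (rule S_split)
  moreover have "S (n-1) (\<lambda>P Q. Suc (Suc Q) \<le> P \<and> P = Suc (Suc Q)) = S (n-1) (\<lambda>P Q. P = Suc (Suc Q))" by (rule S_cong) auto
  moreover have "S (n-1) (\<lambda>P Q. Suc (Suc Q) \<le> P \<and> \<not> P = Suc (Suc Q)) = S (n-1) (\<lambda>P Q. Suc (Suc (Suc Q)) \<le> P)" by (rule S_cong) auto
  ultimately show ?thesis using card_U3[OF assms] by simp
qed

definition a :: "nat \<Rightarrow> int" where "a n = int (card (Av n))"
definition X :: "nat \<Rightarrow> int" where "X n = int (card (S n (\<lambda>P Q. Q = Suc P)) + card (S n (\<lambda>P Q. Suc (Suc P) \<le> Q)))"
definition Y :: "nat \<Rightarrow> int" where "Y n = int (card (S n (\<lambda>P Q. P = Suc (Suc Q))) + card (S n (\<lambda>P Q. Suc (Suc (Suc Q)) \<le> P)))"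

lemma a_split: "2 \<le> n \<Longrightarrow> a n = X n + a (n-1) + Y n"
  unfolding a_def X_def Y_def using partition[of n] card_U1[of n] by simp

lemma X_rec: "3 \<le> n \<Longrightarrow> X n = a (n-1) + X (n-1)"
  unfolding a_def X_def using T2_rec[of n] card_T1[of n] by simp

lemma U2_val: "2 \<le> n \<Longrightarrow> int (card (S n (\<lambda>P Q. P = Suc (Suc Q)))) = a (n-1) - a (n-2)"
proof -
  assume n: "2 \<le> n"
  then obtain m where m: "n = Suc (Suc m)" by (metis add_2_eq_Suc le_Suc_ex)
  show ?thesis unfolding a_def m using card_U2[of m] by simp
qed

lemma Y_rec: "3 \<le> n \<Longrightarrow> Y n = a (n-1) - a (n-2) + Y (n-1)"
  unfolding Y_def using U3_rec[of n] U2_val[of n] by simp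

lemma a0: "a 0 = 1" unfolding a_def Av0 by simp
lemma a1: "a 1 = 1" unfolding a_def Av1 by simp

lemma a2: "a 2 = 2"
proof -
  have "a 2 = X 2 + a 1 + Y 2" using a_split[of 2] by simp
  moreover have "X 2 = a 1" unfolding X_def a_def using card_T1[of 2] S_empty_T2 by simp
  moreover have "Y 2 = a 1 - a 0" unfolding Y_def using U2_val[of 2] S_empty_U3 by simp
  ultimately show ?thesis using a0 a1 by simp
qed

lemma a_rec: "3 \<le> n \<Longrightarrow> a n = 4 * a (n-1) - 2 * a (n-2)"
proof -
  assume n: "3 \<le> n"
  have "a n = X n + a (n-1) + Y n" using a_split n by simp
  moreover have "a (n-1) = X (n-1) + a (n-2) + Y (n-1)" using a_split[of "n-1"] n by (simp add: numeral_2_eq_2)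
  moreover have "X n = a (n-1) + X (n-1)" using X_rec n by simp
  moreover have "Y n = a (n-1) - a (n-2) + Y (n-1)" using Y_rec n by simp
  ultimately show ?thesis by simp
qed

lemma e_a: "int (e n) = a n" unfolding a_def e_eq ..

lemma closed: "real (e (k+1)) = ((2 + sqrt 2) ^ k + (2 - sqrt 2) ^ k) / 2 \<and>
               real (e (k+2)) = ((2 + sqrt 2) ^ (k+1) + (2 - sqrt 2) ^ (k+1)) / 2"
proof (induction k)
  case 0
  have "int (e 1) = 1" "int (e 2) = 2" using e_a a1 a2 by simp_all
  then have e1: "e 1 = 1" and e2: "e 2 = 2" by simp_all
  show ?case unfolding add_0 using e1 e2 by simp
next
  case (Suc k)
  define u where "u = 2 + sqrt 2"
  define v where "v = 2 - sqrt 2"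
  have s2: "sqrt 2 * sqrt 2 = (2::real)" by simp
  have uu: "u * u = 4 * u - 2" unfolding u_def using s2 by (simp add: algebra_simps)
  have vv: "v * v = 4 * v - 2" unfolding v_def using s2 by (simp add: algebra_simps)
  have r: "int (e (k+3)) = 4 * int (e (k+2)) - 2 * int (e (k+1))"
    using a_rec[of "k+3"] e_a by simp
  then have r': "real (e (k+3)) = 4 * real (e (k+2)) - 2 * real (e (k+1))"
    by (metis (mono_tags, opaque_lifting) of_int_of_nat_eq of_int_diff of_int_mult of_int_numeral)
  have pu: "u ^ (k+2) = 4 * u ^ (k+1) - 2 * u ^ k"
  proof -
    have "u ^ (k+2) = u ^ k * (u * u)" by (simp add: power_add power2_eq_square)
    also have "\<dots> = 4 * (u ^ k * u) - 2 * u ^ k" by (subst uu) (simp add: algebra_simps)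
    also have "u ^ k * u = u ^ (k+1)" by simp
    finally show ?thesis .
  qed
  have pv: "v ^ (k+2) = 4 * v ^ (k+1) - 2 * v ^ k"
  proof -
    have "v ^ (k+2) = v ^ k * (v * v)" by (simp add: power_add power2_eq_square)
    also have "\<dots> = 4 * (v ^ k * v) - 2 * v ^ k" by (subst vv) (simp add: algebra_simps)
    also have "v ^ k * v = v ^ (k+1)" by simp
    finally show ?thesis .
  qed
  have IH1: "real (e (k+1)) = (u ^ k + v ^ k) / 2" and IH2: "real (e (k+2)) = (u ^ (k+1) + v ^ (k+1)) / 2"
    using Suc.IH unfolding u_def v_def by auto
  have "real (e (k+3)) = (u ^ (k+2) + v ^ (k+2)) / 2"
    unfolding r' IH1 IH2 pu pv by (simp add: field_simps)
  moreover have "Suc k + 1 = k + 2" "Suc k + 2 = k + 3" "Suc k + 1 + 0 = k + 2" by simp_all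
  ultimately show ?case using IH2 unfolding u_def v_def by (simp add: numeral_3_eq_3 numeral_2_eq_2)
qed

theorem mainTheorem4:
  shows "e 1 = 1 \<and> e 2 = 2 \<and> (\<forall>n\<ge>3. int (e n) = 4 * int (e (n - 1)) - 2 * int (e (n - 2)))
         \<and> (\<forall>n\<ge>1. real (e n) = ((2 + sqrt 2) ^ (n - 1) + (2 - sqrt 2) ^ (n - 1)) / 2)"
proof (intro conjI allI impI)
  show "e 1 = 1" using e_a[of 1] a1 by simp
  show "e 2 = 2" using e_a[of 2] a2 by simp
  fix n :: nat
  assume "3 \<le> n" then show "int (e n) = 4 * int (e (n - 1)) - 2 * int (e (n - 2))"
    using a_rec e_a by simp
next
  fix n :: nat assume "1 \<le> n"
  then obtain k where k: "n = k + 1" by (metis Suc_le_D One_nat_def Suc_eq_plus1)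
  then show "real (e n) = ((2 + sqrt 2) ^ (n - 1) + (2 - sqrt 2) ^ (n - 1)) / 2" using closed[of k] by simp
qed


end
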